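(* Let $n\ge1$, let $\mathcal{S}_n$ be the Shi arrangement in $\mathbb{R}^n$ (hyperplanes $x_i-x_j=0$ and $x_i-x_j=1$ for $1\le i<j\le n$), let $\mathbb{Z}_{n+1}$ be the integers modulo $n+1$ and $H$ the cyclic subgroup of $\mathbb{Z}_{n+1}^n$ generated by $(1,\ldots,1)$. Then the map sending a region $R$ of $\mathcal{S}_n$ to the coset $(f(1),\ldots,f(n)) + H$, where $f=\sigma_n(R)$ and the values $f(i)\in[n]$ are read modulo $n+1$, is a bijection between the regions of $\mathcal{S}_n$ and $\mathbb{Z}_{n+1}^n/H$. In particular $\mathcal{S}_n$ has $(n+1)^{n-1}$ regions.
   Context: A region of an arrangement is a connected component of the complement of the union of its hyperplanes. The map $\sigma_n$ is defined as follows. For a region $R$ of $\mathcal{S}_n$, let $w=w_1\cdots w_n$ be the unique permutation of $[n]$ with $x_{w_1}>\cdots>x_{w_n}$ on $R$; the position of $m$ is the index $p$ with $w_p=m$. For each pair $i<j$ with $x_i-x_j>1$ on $R$ draw an arc from $i$ to $j$; then remove every arc $(i,l)$ for which there is a different arc $(j,k)$ with $i$ weakly left of $j$ and $k$ weakly left of $l$ in $w$. The remaining arcs partition $[n]$ into chains (connected components). Then $\sigma_n(R)=f$ with $f(i)$ equal to the position in $w$ of the leftmost element of the chain containing $i$. *)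

theory Defs
  imports "HOL-Analysis.Analysis"
begin

text \<open>Points of R^n are functions nat => real supported on {1..n}
  (subspace of the product topology, homeomorphic to Euclidean R^n).\<close>

definition shi_space :: "nat \<Rightarrow> (nat \<Rightarrow> real) set" where
  "shi_space n = {x. \<forall>i. i \<notin> {1..n} \<longrightarrow> x i = 0}"

definition shi_complement :: "nat \<Rightarrow> (nat \<Rightarrow> real) set" where
  "shi_complement n = {x \<in> shi_space n. \<forall>i j. 1 \<le> i \<longrightarrow> i < j \<longrightarrow> j \<le> n \<longrightarrow>
      x i - x j \<noteq> 0 \<and> x i - x j \<noteq> 1}"

definition shi_regions :: "nat \<Rightarrow> (nat \<Rightarrow> real) set set" where
  "shi_regions n = {connected_component_set (shi_complement n) x | x. x \<in> shi_complement n}"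

definition shi_perm :: "nat \<Rightarrow> (nat \<Rightarrow> real) set \<Rightarrow> nat \<Rightarrow> nat" where
  "shi_perm n R = (THE w. bij_betw w {1..n} {1..n} \<and> (\<forall>p. p \<notin> {1..n} \<longrightarrow> w p = 0) \<and>
      (\<forall>x\<in>R. \<forall>p q. 1 \<le> p \<longrightarrow> p < q \<longrightarrow> q \<le> n \<longrightarrow> x (w p) > x (w q)))"

definition shi_pos :: "nat \<Rightarrow> (nat \<Rightarrow> real) set \<Rightarrow> nat \<Rightarrow> nat" where
  "shi_pos n R m = (THE p. p \<in> {1..n} \<and> shi_perm n R p = m)"

definition shi_arcs :: "nat \<Rightarrow> (nat \<Rightarrow> real) set \<Rightarrow> (nat \<times> nat) set" where
  "shi_arcs n R = {(i, j). 1 \<le> i \<and> i < j \<and> j \<le> n \<and> (\<forall>x\<in>R. x i - x j > 1)}"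

definition shi_kept :: "nat \<Rightarrow> (nat \<Rightarrow> real) set \<Rightarrow> (nat \<times> nat) set" where
  "shi_kept n R = {(i, l) \<in> shi_arcs n R. \<not> (\<exists>(j, k) \<in> shi_arcs n R. (j, k) \<noteq> (i, l) \<and>
      shi_pos n R i \<le> shi_pos n R j \<and> shi_pos n R k \<le> shi_pos n R l)}"

definition shi_chain :: "nat \<Rightarrow> (nat \<Rightarrow> real) set \<Rightarrow> nat \<Rightarrow> nat set" where
  "shi_chain n R i = {m \<in> {1..n}. (i, m) \<in> (shi_kept n R \<union> (shi_kept n R)\<inverse>)\<^sup>*}"

definition shi_sigma :: "nat \<Rightarrow> (nat \<Rightarrow> real) set \<Rightarrow> nat \<Rightarrow> nat" where
  "shi_sigma n R i = (if i \<in> {1..n} then Min (shi_pos n R ` shi_chain n R i) else 0)"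

text \<open>Z_{n+1}^n as functions {1..n} -> {0..n} (0 outside), and the congruence modulo
  the cyclic subgroup H generated by (1,...,1).\<close>
definition zvec :: "nat \<Rightarrow> (nat \<Rightarrow> nat) set" where
  "zvec n = {v. (\<forall>i\<in>{1..n}. v i \<le> n) \<and> (\<forall>i. i \<notin> {1..n} \<longrightarrow> v i = 0)}"

definition zrel :: "nat \<Rightarrow> ((nat \<Rightarrow> nat) \<times> (nat \<Rightarrow> nat)) set" where
  "zrel n = {(u, v). u \<in> zvec n \<and> v \<in> zvec n \<and>
      (\<exists>c::nat. \<forall>i\<in>{1..n}. v i = (u i + c) mod (n + 1))}"

definition shi_coset :: "nat \<Rightarrow> (nat \<Rightarrow> real) set \<Rightarrow> (nat \<Rightarrow> nat) set" where
  "shi_coset n R = zrel n `` {(\<lambda>i. if i \<in> {1..n} then shi_sigma n R i mod (n + 1) else 0)}"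

end

theory Submission
  imports Defs
begin


definition shiftv :: "nat \<Rightarrow> nat \<Rightarrow> (nat \<Rightarrow> nat) \<Rightarrow> nat \<Rightarrow> nat" where
  "shiftv n c u = (\<lambda>i. if i \<in> {1..n} then (u i + c) mod (n + 1) else 0)"

definition pfv :: "nat \<Rightarrow> (nat \<Rightarrow> nat) \<Rightarrow> bool" where
  "pfv n f \<longleftrightarrow> (\<forall>i\<in>{1..n}. 1 \<le> f i \<and> f i \<le> n) \<and> (\<forall>i. i \<notin> {1..n} \<longrightarrow> f i = 0) \<and>
     (\<forall>v\<in>{1..n}. v \<le> card {i\<in>{1..n}. f i \<le> v})"

lemma cyclic_exists:
  fixes F :: "nat \<Rightarrow> int"
  assumes M: "M \<ge> 1" and per: "\<And>t. F (t + M) = F t - 1"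
  shows "\<exists>s<M. \<forall>k\<in>{1..<M}. F s \<le> F (s + k)"
proof -
  let ?m = "Min (F ` {..<M})"
  have fin: "finite (F ` {..<M})" by simp
  have "F 0 \<in> F ` {..<M}" using M by auto
  then have ne: "F ` {..<M} \<noteq> {}" by blast
  have ex: "\<exists>s. s < M \<and> F s = ?m" using Min_in[OF fin ne] by auto
  define s where "s = (LEAST s. s < M \<and> F s = ?m)"
  have s: "s < M \<and> F s = ?m" unfolding s_def by (rule LeastI_ex) (rule ex)
  have smin: "F t \<noteq> ?m" if "t < s" for t
    using not_less_Least[of t "\<lambda>s. s < M \<and> F s = ?m"] that s unfolding s_def[symmetric] by auto
  have ge: "?m \<le> F t" if "t < M" for t using fin that by auto
  show ?thesis
  proof (intro exI conjI ballI)
    show "s < M" using s by simp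
    fix k assume k: "k \<in> {1..<M}"
    show "F s \<le> F (s+k)"
    proof (cases "s + k < M")
      case True then show ?thesis using ge s by simp
    next
      case False
      define t where "t = s + k - M"
      have t: "t < s" "s + k = t + M" using k False unfolding t_def by auto
      have "F t \<ge> ?m" using ge t s by simp
      moreover have "F t \<noteq> ?m" using smin t by simp
      moreover have "F (s + k) = F t - 1" using t per[of t] by simp
      ultimately show ?thesis using s by linarith
    qed
  qed
qed

lemma cyclic_unique_aux:
  fixes F :: "nat \<Rightarrow> int"
  assumes per: "\<And>t. F (t + M) = F t - 1"
  and s: "\<forall>k\<in>{1..<M}. F s \<le> F (s + k)"
  and s': "s' < M" "\<forall>k\<in>{1..<M}. F s' \<le> F (s' + k)"
  and lt: "s < s'"
  shows False
proof -
  have "s' - s \<in> {1..<M}" using lt s' by auto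
  then have "F s \<le> F (s + (s' - s))" using s by blast
  moreover have "M + s - s' \<in> {1..<M}" using lt s' by auto
  then have "F s' \<le> F (s' + (M + s - s'))" using s'(2) by blast
  moreover have "s' + (M + s - s') = s + M" using lt s' by auto
  ultimately show False using per[of s] lt by simp
qed

lemma cyclic_unique:
  fixes F :: "nat \<Rightarrow> int"
  assumes per: "\<And>t. F (t + M) = F t - 1"
  and s: "s < M" "\<forall>k\<in>{1..<M}. F s \<le> F (s + k)"
  and s': "s' < M" "\<forall>k\<in>{1..<M}. F s' \<le> F (s' + k)"
  shows "s = s'"
  using cyclic_unique_aux[OF per s(2) s'] cyclic_unique_aux[OF per s'(2) s]
  by (metis linorder_neqE_nat)

lemma cyclic_good_shift:
  fixes F :: "nat \<Rightarrow> int"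
  assumes per: "\<And>t. F (t + M) = F t - 1"
  shows "(\<forall>k\<in>{1..<M}. F (s + q * M) \<le> F (s + q * M + k)) \<longleftrightarrow> (\<forall>k\<in>{1..<M}. F s \<le> F (s + k))"
proof (induction q)
  case 0 then show ?case by simp
next
  case (Suc q)
  have e1: "F (s + Suc q * M) = F (s + q * M) - 1" using per[of "s + q*M"] by (simp add: algebra_simps)
  have e2: "F (s + Suc q * M + k) = F (s + q * M + k) - 1" for k
    using per[of "s + q*M + k"] by (simp add: algebra_simps)
  have "\<forall>k. (F (s + Suc q * M) \<le> F (s + Suc q * M + k)) = (F (s + q*M) \<le> F (s + q*M + k))"
  proof
    fix k show "(F (s + Suc q * M) \<le> F (s + Suc q * M + k)) = (F (s + q*M) \<le> F (s + q*M + k))"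
      unfolding e1 e2 by linarith
  qed
  then show ?case using Suc by simp
qed

lemma cyclic_good_mod:
  fixes F :: "nat \<Rightarrow> int"
  assumes per: "\<And>t. F (t + M) = F t - 1"
  shows "(\<forall>k\<in>{1..<M}. F s \<le> F (s + k)) \<longleftrightarrow> (\<forall>k\<in>{1..<M}. F (s mod M) \<le> F (s mod M + k))"
  using cyclic_good_shift[where F=F and M=M, OF per, of "s mod M" "s div M"] by (simp add: mod_div_mult_eq)


lemma card_fibers:
  assumes "finite A" "finite B" "g ` A \<subseteq> B"
  shows "card A = (\<Sum>b\<in>B. card {a\<in>A. g a = b})"
proof -
  have "A = (\<Union>b\<in>B. {a\<in>A. g a = b})" using assms by auto
  then have "card A = card (\<Union>b\<in>B. {a\<in>A. g a = b})" by simp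
  also have "\<dots> = (\<Sum>b\<in>B. card {a\<in>A. g a = b})"
    by (rule card_UN_disjoint) (use assms in auto)
  finally show ?thesis .
qed

definition cnt :: "nat \<Rightarrow> (nat \<Rightarrow> nat) \<Rightarrow> nat \<Rightarrow> nat" where
  "cnt n u j = card {i\<in>{1..n}. u i = j mod (n + 1)}"

definition Sc :: "nat \<Rightarrow> (nat \<Rightarrow> nat) \<Rightarrow> nat \<Rightarrow> nat" where
  "Sc n u t = (\<Sum>j<t. cnt n u j)"

definition Fc :: "nat \<Rightarrow> (nat \<Rightarrow> nat) \<Rightarrow> nat \<Rightarrow> int" where
  "Fc n u t = int (Sc n u t) - int t"

lemma window_periodic:
  fixes g :: "nat \<Rightarrow> nat"
  assumes per: "\<And>j. g (j + M) = g j"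
  shows "(\<Sum>j\<in>{t..<t+M}. g j) = (\<Sum>j<M. g j)"
proof (induction t)
  case 0 then show ?case by (simp add: atLeast0LessThan)
next
  case (Suc t)
  show ?case
  proof (cases "M = 0")
    case True then show ?thesis by simp
  next
    case False
    have "(\<Sum>j\<in>{t..<Suc t+M}. g j) = g t + (\<Sum>j\<in>{Suc t..<Suc t+M}. g j)"
      using False by (subst sum.atLeast_Suc_lessThan) auto
    moreover have "(\<Sum>j\<in>{t..<Suc t+M}. g j) = (\<Sum>j\<in>{t..<t+M}. g j) + g (t + M)"
      by simp
    ultimately show ?thesis using Suc per[of t] by simp
  qed
qed

lemma cnt_per: "cnt n u (j + (n+1)) = cnt n u j"
proof -
  have "(j + (n+1)) mod (n+1) = j mod (n+1)" by (rule mod_add_self2)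
  then show ?thesis unfolding cnt_def by simp
qed

lemma cnt_total:
  assumes "u \<in> zvec n"
  shows "(\<Sum>j<n+1. cnt n u j) = n"
proof -
  have "card {1..n} = (\<Sum>j\<in>{..<n+1}. card {i\<in>{1..n}. u i = j})"
    by (rule card_fibers) (use assms in \<open>auto simp: zvec_def\<close>)
  moreover have "cnt n u j = card {i\<in>{1..n}. u i = j}" if "j < n + 1" for j
    using that unfolding cnt_def by simp
  ultimately show ?thesis by simp
qed

lemma Sc_per:
  assumes "u \<in> zvec n"
  shows "Sc n u (t + (n+1)) = Sc n u t + n"
proof -
  have "Sc n u (t + (n+1)) = (\<Sum>j\<in>{0..<t}. cnt n u j) + (\<Sum>j\<in>{t..<t + (n+1)}. cnt n u j)"
    unfolding Sc_def atLeast0LessThan[symmetric] by (rule sum.atLeastLessThan_concat[symmetric]) auto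
  also have "(\<Sum>j\<in>{t..<t + (n+1)}. cnt n u j) = n"
    using window_periodic[of "cnt n u" "n+1" t] cnt_per cnt_total[OF assms] by simp
  finally show ?thesis unfolding Sc_def atLeast0LessThan by simp
qed

lemma Fc_per:
  assumes "u \<in> zvec n"
  shows "Fc n u (t + (n+1)) = Fc n u t - 1"
  unfolding Fc_def using Sc_per[OF assms, of t] by simp

lemma mod_shift_iff:
  fixes a c j M :: nat
  assumes "a < M" "c < M" "j < M"
  shows "((a + c) mod M = j) \<longleftrightarrow> (a = (j + M - c) mod M)"
proof -
  have m1: "x mod M = (if x < M then x else x - M)" if "x < 2 * M" for x
  proof (cases "x < M")
    case False
    then have "x mod M = (x - M) mod M" by (simp add: le_mod_geq)
    then show ?thesis using False that by simp
  qed simp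
  show ?thesis using m1[of "a + c"] m1[of "j + M - c"] assms by auto
qed

lemma pfv_iff_count:
  assumes "\<forall>i\<in>{1..n}. v i \<le> n" "\<forall>i. i \<notin> {1..n} \<longrightarrow> v i = 0"
  shows "pfv n v \<longleftrightarrow> (\<forall>k\<in>{1..n}. k \<le> card {i\<in>{1..n}. 1 \<le> v i \<and> v i \<le> k})"
proof
  assume p: "pfv n v"
  show "\<forall>k\<in>{1..n}. k \<le> card {i\<in>{1..n}. 1 \<le> v i \<and> v i \<le> k}"
  proof
    fix k assume k: "k \<in> {1..n}"
    have "{i\<in>{1..n}. 1 \<le> v i \<and> v i \<le> k} = {i\<in>{1..n}. v i \<le> k}" using p unfolding pfv_def by auto
    then show "k \<le> card {i\<in>{1..n}. 1 \<le> v i \<and> v i \<le> k}" using p k unfolding pfv_def by auto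
  qed
next
  assume c: "\<forall>k\<in>{1..n}. k \<le> card {i\<in>{1..n}. 1 \<le> v i \<and> v i \<le> k}"
  have all1: "\<forall>i\<in>{1..n}. 1 \<le> v i"
  proof (cases "n = 0")
    case False
    then have "n \<le> card {i\<in>{1..n}. 1 \<le> v i \<and> v i \<le> n}" using c by auto
    moreover have "{i\<in>{1..n}. 1 \<le> v i \<and> v i \<le> n} \<subseteq> {1..n}" by auto
    ultimately have "{i\<in>{1..n}. 1 \<le> v i \<and> v i \<le> n} = {1..n}"
      by (metis (no_types, lifting) card_atLeastAtMost card_seteq diff_Suc_1 finite_atLeastAtMost)
    then show ?thesis by blast
  qed simp
  have "{i\<in>{1..n}. 1 \<le> v i \<and> v i \<le> k} = {i\<in>{1..n}. v i \<le> k}" for k using all1 by auto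
  then show "pfv n v" unfolding pfv_def using all1 assms c by auto
qed

lemma sum_split_lessThan:
  fixes a b :: nat
  shows "(\<Sum>j<a+b. g j) = (\<Sum>j<a. g j) + (\<Sum>j\<in>{a..<a+b}. (g j :: nat))"
  using sum.atLeastLessThan_concat[of 0 a "a+b" g] by (simp add: atLeast0LessThan)

lemma shiftv_count:
  assumes u: "u \<in> zvec n" and c: "c < n + 1" and k: "k \<le> n"
  shows "card {i\<in>{1..n}. 1 \<le> shiftv n c u i \<and> shiftv n c u i \<le> k}
         = Sc n u (1 + (n+1) - c + k) - Sc n u (1 + (n+1) - c)"
proof -
  let ?v = "shiftv n c u"
  let ?s = "1 + (n+1) - c"
  have "card {i\<in>{1..n}. 1 \<le> ?v i \<and> ?v i \<le> k} = (\<Sum>j\<in>{1..k}. card {i\<in>{i\<in>{1..n}. 1 \<le> ?v i \<and> ?v i \<le> k}. ?v i = j})"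
    by (rule card_fibers) auto
  also have "\<dots> = (\<Sum>j\<in>{1..k}. cnt n u (j + ((n+1) - c)))"
  proof (rule sum.cong)
    fix j assume j: "j \<in> {1..k}"
    have "{i\<in>{i\<in>{1..n}. 1 \<le> ?v i \<and> ?v i \<le> k}. ?v i = j} = {i\<in>{1..n}. u i = (j + ((n+1) - c)) mod (n + 1)}"
    proof -
      have "(?v i = j) \<longleftrightarrow> (u i = (j + ((n+1) - c)) mod (n + 1))" if "i \<in> {1..n}" for i
      proof -
        have "u i \<le> n" using u that unfolding zvec_def by blast
        then have "u i < n + 1" by simp
        then have "((u i + c) mod (n+1) = j) \<longleftrightarrow> (u i = (j + (n+1) - c) mod (n+1))"
          using mod_shift_iff[of "u i" "n+1" c j] c j k by auto
        then show ?thesis using that c by (simp add: shiftv_def)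
      qed
      then show ?thesis using j by auto
    qed
    then show "card {i\<in>{i\<in>{1..n}. 1 \<le> ?v i \<and> ?v i \<le> k}. ?v i = j} = cnt n u (j + ((n+1) - c))"
      unfolding cnt_def by simp
  qed simp
  also have "\<dots> = (\<Sum>t\<in>{1 + ((n+1) - c)..<1 + ((n+1) - c) + k}. cnt n u t)"
  proof -
    have A: "(\<Sum>t\<in>{1 + ((n+1) - c)..<k + 1 + ((n+1) - c)}. cnt n u t) = (\<Sum>j\<in>{1..<k+1}. cnt n u (j + ((n+1) - c)))"
      by (rule sum.shift_bounds_nat_ivl)
    have B: "{1..<k+1} = {1..k}" by auto
    have C: "k + 1 + ((n+1) - c) = 1 + ((n+1) - c) + k" by simp
    show ?thesis unfolding B[symmetric] C[symmetric] by (rule A[symmetric])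
  qed
  also have "\<dots> = Sc n u (?s + k) - Sc n u ?s"
  proof -
    have e: "Sc n u (?s + k) = Sc n u ?s + (\<Sum>j\<in>{?s..<?s+k}. cnt n u j)"
      unfolding Sc_def by (rule sum_split_lessThan)
    have s_eq: "1 + ((n+1) - c) = ?s" using c by simp
    show ?thesis unfolding s_eq using e by linarith
  qed
  finally show ?thesis .
qed

lemma pfv_shift_iff:
  assumes u: "u \<in> zvec n" and c: "c < n + 1"
  shows "pfv n (shiftv n c u) \<longleftrightarrow> (\<forall>k\<in>{1..<n+1}. Fc n u (1 + (n+1) - c) \<le> Fc n u (1 + (n+1) - c + k))"
proof -
  let ?s = "1 + (n+1) - c"
  have mono: "Sc n u ?s \<le> Sc n u (?s + k)" for k
    unfolding Sc_def by (rule sum_mono2) auto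
  have "pfv n (shiftv n c u) \<longleftrightarrow> (\<forall>k\<in>{1..n}. k \<le> card {i\<in>{1..n}. 1 \<le> shiftv n c u i \<and> shiftv n c u i \<le> k})"
    by (rule pfv_iff_count) (auto simp: shiftv_def)
  also have "\<dots> \<longleftrightarrow> (\<forall>k\<in>{1..n}. k \<le> Sc n u (?s + k) - Sc n u ?s)"
    using shiftv_count[OF u c] by auto
  also have "\<dots> \<longleftrightarrow> (\<forall>k\<in>{1..<n+1}. Fc n u ?s \<le> Fc n u (?s + k))"
  proof -
    have "(k \<le> Sc n u (?s + k) - Sc n u ?s) \<longleftrightarrow> (Fc n u ?s \<le> Fc n u (?s + k))" for k
      using mono[of k] unfolding Fc_def by linarith
    moreover have "{1..<n+1} = {1..n}" by auto
    ultimately show ?thesis by simp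
  qed
  finally show ?thesis .
qed

lemma shiftv_mod: "shiftv n c u = shiftv n (c mod (n+1)) u"
  unfolding shiftv_def by (rule ext) (metis mod_add_right_eq)

lemma pfv_zvec: "pfv n f \<Longrightarrow> f \<in> zvec n"
  unfolding pfv_def zvec_def by auto

lemma mod_one_plus:
  assumes "n \<ge> (1::nat)"
  shows "(1 + (n+1)) mod (n+1) = 1"
proof -
  have "(1 + (n+1)) mod (n+1) = 1 mod (n+1)" by (rule mod_add_self2)
  then show ?thesis using assms by simp
qed

lemma pollak_exists:
  assumes u: "u \<in> zvec n" and n: "n \<ge> 1"
  shows "\<exists>c. pfv n (shiftv n c u)"
proof -
  obtain s where s: "s < n + 1" "\<forall>k\<in>{1..<n+1}. Fc n u s \<le> Fc n u (s + k)"
    using cyclic_exists[of "n+1" "Fc n u"] Fc_per[OF u] by auto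
  define c where "c = (if s = 0 then 1 else if s = 1 then 0 else 1 + (n+1) - s)"
  have c: "c < n + 1" using n s unfolding c_def by auto
  have "(1 + (n+1) - c) mod (n+1) = s"
  proof -
    consider "s = 0" | "s = 1" | "s \<ge> 2" by linarith
    then show ?thesis
    proof cases
      case 1 then show ?thesis using n unfolding c_def by simp
    next
      case 2 then show ?thesis using mod_one_plus[OF n] unfolding c_def by simp
    next
      case 3 then show ?thesis using s unfolding c_def by simp
    qed
  qed
  then have "\<forall>k\<in>{1..<n+1}. Fc n u (1 + (n+1) - c) \<le> Fc n u (1 + (n+1) - c + k)"
    using cyclic_good_mod[where F="Fc n u" and M="n+1", OF Fc_per[OF u], of "1 + (n+1) - c"] s
    by simp
  then show ?thesis using pfv_shift_iff[OF u c] by blast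
qed

lemma pollak_unique:
  assumes f: "pfv n f" and g: "pfv n (shiftv n c f)" and n: "n \<ge> 1"
  shows "shiftv n c f = f"
proof -
  have u: "f \<in> zvec n" using pfv_zvec f .
  define c' where "c' = c mod (n+1)"
  have c': "c' < n + 1" unfolding c'_def by simp
  have sc: "shiftv n c f = shiftv n c' f" unfolding c'_def by (rule shiftv_mod)
  have g': "pfv n (shiftv n c' f)" using g unfolding sc .
  have s0: "shiftv n 0 f = f"
  proof
    fix i show "shiftv n 0 f i = f i"
    proof (cases "i \<in> {1..n}")
      case True then have "f i \<le> n" using f unfolding pfv_def by blast
      then show ?thesis using True unfolding shiftv_def by simp
    next
      case False then show ?thesis using f unfolding shiftv_def pfv_def by auto
    qed
  qed
  have G: "(\<forall>k\<in>{1..<n+1}. Fc n u s \<le> Fc n u (s + k)) \<longleftrightarrow> (\<forall>k\<in>{1..<n+1}. Fc n u (s mod (n+1)) \<le> Fc n u (s mod (n+1) + k))"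
    if "u \<in> zvec n" for s u using cyclic_good_mod[where F="Fc n u" and M="n+1", OF Fc_per[OF that]] by simp
  have a: "\<forall>k\<in>{1..<n+1}. Fc n f ((1 + (n+1) - c') mod (n+1)) \<le> Fc n f ((1 + (n+1) - c') mod (n+1) + k)"
    using pfv_shift_iff[OF u c'] g' G[OF u] by blast
  have b: "\<forall>k\<in>{1..<n+1}. Fc n f ((1 + (n+1) - 0) mod (n+1)) \<le> Fc n f ((1 + (n+1) - 0) mod (n+1) + k)"
    using pfv_shift_iff[OF u, of 0] s0 f G[OF u] by auto
  have "(1 + (n+1) - c') mod (n+1) = (1 + (n+1) - 0) mod (n+1)"
    by (rule cyclic_unique[where F="Fc n f" and M="n+1", OF Fc_per[OF u]]) (use a b in auto)
  then have "c' = 0"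
  proof -
    assume e: "(1 + (n+1) - c') mod (n+1) = (1 + (n+1) - 0) mod (n+1)"
    have r: "(1 + (n+1) - 0) mod (n+1) = 1" using mod_one_plus[OF n] by simp
    show "c' = 0"
    proof (rule ccontr)
      assume "c' \<noteq> 0"
      then consider "c' = 1" | "c' \<ge> 2" by linarith
      then show False
      proof cases
        case 1 then show False using e r by simp
      next
        case 2
        then have "(1 + (n+1) - c') mod (n+1) = 1 + (n+1) - c'" using c' by simp
        then show False using e r 2 c' by simp
      qed
    qed
  qed
  then show ?thesis using s0 sc by simp
qed


definition pstruct :: "nat set \<Rightarrow> (nat \<times> nat) set \<Rightarrow> (nat \<Rightarrow> nat) \<Rightarrow> bool" where
  "pstruct P N st \<longleftrightarrow> N \<subseteq> P \<times> P \<and> (\<forall>(p,q)\<in>N. p < q) \<and>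
     (\<forall>p q q'. (p,q)\<in>N \<longrightarrow> (p,q')\<in>N \<longrightarrow> q = q') \<and>
     (\<forall>p p' q. (p,q)\<in>N \<longrightarrow> (p',q)\<in>N \<longrightarrow> p = p') \<and>
     (\<forall>p q p' q'. (p,q)\<in>N \<longrightarrow> (p',q')\<in>N \<longrightarrow> p < p' \<longrightarrow> q < q') \<and>
     (\<forall>p\<in>P. st p \<in> P \<and> (st p, p) \<in> N\<^sup>* \<and> st p \<notin> Range N)"

context
  fixes P N st
  assumes ps: "pstruct P N st"
begin

lemma ps_sub: "(p,q) \<in> N \<Longrightarrow> p \<in> P \<and> q \<in> P"
  using ps unfolding pstruct_def by auto

lemma ps_lt: "(p,q) \<in> N \<Longrightarrow> p < q"
  using ps unfolding pstruct_def by auto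

lemma ps_fun: "(p,q) \<in> N \<Longrightarrow> (p,q') \<in> N \<Longrightarrow> q = q'"
  using ps unfolding pstruct_def by blast

lemma ps_inj: "(p,q) \<in> N \<Longrightarrow> (p',q) \<in> N \<Longrightarrow> p = p'"
  using ps unfolding pstruct_def by blast

lemma ps_mono: "(p,q) \<in> N \<Longrightarrow> (p',q') \<in> N \<Longrightarrow> p < p' \<Longrightarrow> q < q'"
  using ps unfolding pstruct_def by blast

lemma ps_st: "p \<in> P \<Longrightarrow> st p \<in> P \<and> (st p, p) \<in> N\<^sup>* \<and> st p \<notin> Range N"
  using ps unfolding pstruct_def by blast

lemma ps_rtrancl_le: "(a,b) \<in> N\<^sup>* \<Longrightarrow> a \<le> b"
  by (induction rule: rtrancl_induct) (auto dest: ps_lt)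

lemma ps_rtrancl_P: "(a,b) \<in> N\<^sup>* \<Longrightarrow> a \<in> P \<Longrightarrow> b \<in> P"
  by (induction rule: rtrancl_induct) (auto dest: ps_sub)

lemma ps_sv: "single_valued N"
  unfolding single_valued_def using ps_fun by blast

lemma ps_sv_conv: "single_valued (N\<inverse>)"
  unfolding single_valued_def using ps_inj by blast

lemma ps_back_unique:
  assumes "(a,q) \<in> N\<^sup>*" "(b,q) \<in> N\<^sup>*" "a \<notin> Range N" "b \<notin> Range N"
  shows "a = b"
proof -
  have qa: "(q,a) \<in> (N\<inverse>)\<^sup>*" and qb: "(q,b) \<in> (N\<inverse>)\<^sup>*"
    using assms(1,2) by (auto simp: rtrancl_converse)
  have nostep: "(x,y) \<in> (N\<inverse>)\<^sup>* \<Longrightarrow> x \<notin> Range N \<Longrightarrow> x = y" for x y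
    by (erule converse_rtranclE) auto
  from single_valued_confluent[OF ps_sv_conv qa qb] show ?thesis
    using nostep assms(3,4) by metis
qed

lemma ps_st_step: "(p,q) \<in> N \<Longrightarrow> st q = st p"
proof -
  assume pq: "(p,q) \<in> N"
  then have p: "p \<in> P" and q: "q \<in> P" using ps_sub by auto
  have "(st p, q) \<in> N\<^sup>*" using ps_st[OF p] pq by (meson rtrancl.rtrancl_into_rtrancl)
  then show "st q = st p" using ps_back_unique ps_st[OF q] ps_st[OF p] by blast
qed

lemma ps_st_rtrancl: "(p,q) \<in> N\<^sup>* \<Longrightarrow> st q = st p"
  by (induction rule: rtrancl_induct) (auto dest: ps_st_step)

lemma ps_st_fix: "p \<in> P \<Longrightarrow> (st p = p) \<longleftrightarrow> p \<notin> Range N"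
proof
  assume "p \<in> P" "st p = p" then show "p \<notin> Range N" using ps_st by metis
next
  assume p: "p \<in> P" and r: "p \<notin> Range N"
  have "(st p, p) \<in> N\<^sup>*" using ps_st[OF p] by blast
  then show "st p = p" using r by (cases rule: rtranclE) auto
qed

lemma ps_st_st: "p \<in> P \<Longrightarrow> st (st p) = st p"
  using ps_st ps_st_fix by blast

lemma ps_st_le: "p \<in> P \<Longrightarrow> st p \<le> p"
  using ps_st ps_rtrancl_le by blast

lemma ps_dom_iff:
  assumes p: "p \<in> P"
  shows "p \<in> Domain N \<longleftrightarrow> (\<exists>q\<in>P. p < q \<and> st q = st p)"
proof
  assume "p \<in> Domain N"
  then obtain q where "(p,q) \<in> N" by blast
  then show "\<exists>q\<in>P. p < q \<and> st q = st p" using ps_sub ps_lt ps_st_step by blast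
next
  assume "\<exists>q\<in>P. p < q \<and> st q = st p"
  then obtain q where q: "q \<in> P" "p < q" "st q = st p" by blast
  have "(st p, p) \<in> N\<^sup>*" "(st p, q) \<in> N\<^sup>*" using ps_st p q by metis+
  from single_valued_confluent[OF ps_sv this] have "(p,q) \<in> N\<^sup>*"
    using ps_rtrancl_le q(2) by fastforce
  then show "p \<in> Domain N" using q(2) by (cases rule: converse_rtranclE) auto
qed

lemma ps_comp_iff:
  assumes p: "p \<in> P" and q: "q \<in> P"
  shows "(p,q) \<in> (N \<union> N\<inverse>)\<^sup>* \<longleftrightarrow> st p = st q"
proof
  assume "(p,q) \<in> (N \<union> N\<inverse>)\<^sup>*"
  then show "st p = st q"
    by (induction rule: rtrancl_induct) (auto dest: ps_st_step)
next
  assume e: "st p = st q"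
  have a: "(st p, p) \<in> (N \<union> N\<inverse>)\<^sup>*" using ps_st[OF p] rtrancl_mono[of N "N \<union> N\<inverse>"] by blast
  have b: "(st q, q) \<in> (N \<union> N\<inverse>)\<^sup>*" using ps_st[OF q] rtrancl_mono[of N "N \<union> N\<inverse>"] by blast
  have "(p, st p) \<in> ((N \<union> N\<inverse>)\<inverse>)\<^sup>*" using a by (simp add: rtrancl_converse)
  moreover have "(N \<union> N\<inverse>)\<inverse> = N \<union> N\<inverse>" by auto
  ultimately have "(p, st p) \<in> (N \<union> N\<inverse>)\<^sup>*" by simp
  then show "(p,q) \<in> (N \<union> N\<inverse>)\<^sup>*" using b e by simp
qed

lemma ps_st_pos_iff:
  assumes a: "a \<in> P" and fin: "finite P"
  shows "st a = a \<longleftrightarrow> card {p\<in>P. st p = a} > 0"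
proof
  assume "st a = a" then show "card {p\<in>P. st p = a} > 0" using a fin by (auto simp: card_gt_0_iff)
next
  assume "card {p\<in>P. st p = a} > 0"
  then obtain p where "p \<in> P" "st p = a" by (auto simp: card_gt_0_iff)
  then show "st a = a" using ps_st_st by blast
qed

end

lemma uniq_step:
  assumes ps1: "pstruct P N st" and ps2: "pstruct P N' st'"
  and rng: "\<forall>a\<in>P. a \<in> Range N \<longleftrightarrow> a \<in> Range N'"
  and IH: "\<forall>q<p. \<forall>r. (q,r) \<in> N \<longleftrightarrow> (q,r) \<in> N'"
  and pa: "(p,a) \<in> N" and pb: "(p,b) \<in> N'"
  shows "a = b"
proof (rule ccontr)
  assume ne: "a \<noteq> b"
  have aP: "a \<in> P" and bP: "b \<in> P" using ps_sub[OF ps1 pa] ps_sub[OF ps2 pb] by auto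
  consider "a < b" | "b < a" using ne by linarith
  then show False
  proof cases
    case 1
    have "a \<in> Range N'" using rng aP pa by blast
    then obtain q where q: "(q,a) \<in> N'" by blast
    consider "q = p" | "q < p" | "p < q" by linarith
    then show False
    proof cases
      case 1 then show False using ps_fun[OF ps2 pb] q ne by auto
    next
      case 2 then have "(q,a) \<in> N" using IH q by blast
      then show False using ps_inj[OF ps1 pa] 2 by auto
    next
      case 3 then show False using ps_mono[OF ps2 pb q] \<open>a < b\<close> by auto
    qed
  next
    case 2
    have "b \<in> Range N" using rng bP pb by blast
    then obtain q where q: "(q,b) \<in> N" by blast
    consider "q = p" | "q < p" | "p < q" by linarith
    then show False
    proof cases
      case 1 then show False using ps_fun[OF ps1 pa] q ne by auto
    next
      case 2 then have "(q,b) \<in> N'" using IH q by blast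
      then show False using ps_inj[OF ps2 pb] 2 by auto
    next
      case 3 then show False using ps_mono[OF ps1 pa q] \<open>b < a\<close> by auto
    qed
  qed
qed

lemma pstruct_unique:
  assumes ps1: "pstruct P N st" and ps2: "pstruct P N' st'" and fin: "finite P"
  and cnt: "\<forall>v. card {p\<in>P. st p = v} = card {p\<in>P. st' p = v}"
  shows "N = N' \<and> (\<forall>p\<in>P. st p = st' p)"
proof -
  have fix_iff: "st a = a \<longleftrightarrow> st' a = a" if "a \<in> P" for a
    using ps_st_pos_iff[OF ps1 that fin] ps_st_pos_iff[OF ps2 that fin] cnt by simp
  have rng: "\<forall>a\<in>P. a \<in> Range N \<longleftrightarrow> a \<in> Range N'"
    using fix_iff ps_st_fix[OF ps1] ps_st_fix[OF ps2] by blast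
  have main: "p \<in> P \<longrightarrow> st p = st' p \<and> (\<forall>r. (p,r) \<in> N \<longleftrightarrow> (p,r) \<in> N')" for p
  proof (induction p rule: less_induct)
    case (less p)
    show ?case
    proof
      assume p: "p \<in> P"
      have IH: "\<forall>q<p. \<forall>r. (q,r) \<in> N \<longleftrightarrow> (q,r) \<in> N'"
      proof (intro allI impI)
        fix q r assume "q < p"
        show "(q,r) \<in> N \<longleftrightarrow> (q,r) \<in> N'"
        proof (cases "q \<in> P")
          case True then show ?thesis using less \<open>q < p\<close> by blast
        next
          case False then show ?thesis using ps_sub[OF ps1] ps_sub[OF ps2] by blast
        qed
      qed
      have IHst: "\<forall>q\<in>P. q < p \<longrightarrow> st q = st' q" using less by blast
      have stp: "st p = st' p"
      proof (cases "p \<in> Range N")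
        case False
        then have "st p = p" using ps_st_fix[OF ps1 p] by simp
        moreover have "st' p = p" using False rng p ps_st_fix[OF ps2 p] by blast
        ultimately show ?thesis by simp
      next
        case True
        then obtain q where q: "(q,p) \<in> N" by blast
        have "q < p" "q \<in> P" using ps_lt[OF ps1 q] ps_sub[OF ps1 q] by auto
        have q': "(q,p) \<in> N'" using IH q \<open>q < p\<close> by blast
        have "st p = st q" using ps_st_step[OF ps1 q] .
        also have "\<dots> = st' q" using IHst \<open>q < p\<close> \<open>q \<in> P\<close> by blast
        also have "\<dots> = st' p" using ps_st_step[OF ps2 q'] by simp
        finally show ?thesis .
      qed
      define s where "s = st p"
      have low: "{q\<in>P. q \<le> p \<and> st q = s} = {q\<in>P. q \<le> p \<and> st' q = s}"
        using IHst stp by (auto simp: le_less)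
      have split: "card {q\<in>P. st q = s} = card {q\<in>P. q \<le> p \<and> st q = s} + card {q\<in>P. p < q \<and> st q = s}"
        for st :: "nat \<Rightarrow> nat"
      proof -
        have "{q\<in>P. st q = s} = {q\<in>P. q \<le> p \<and> st q = s} \<union> {q\<in>P. p < q \<and> st q = s}" by auto
        then show ?thesis using fin by (simp add: card_Un_disjoint[symmetric]) (subst card_Un_disjoint[symmetric]; auto)
      qed
      have high: "card {q\<in>P. p < q \<and> st q = s} = card {q\<in>P. p < q \<and> st' q = s}"
        using split[of st] split[of st'] low cnt by simp
      have dom: "p \<in> Domain N \<longleftrightarrow> p \<in> Domain N'"
      proof -
        have "p \<in> Domain N \<longleftrightarrow> card {q\<in>P. p < q \<and> st q = s} > 0"
          using ps_dom_iff[OF ps1 p] fin unfolding s_def by (auto simp: card_gt_0_iff)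
        moreover have "p \<in> Domain N' \<longleftrightarrow> card {q\<in>P. p < q \<and> st' q = s} > 0"
          using ps_dom_iff[OF ps2 p] fin stp unfolding s_def by (auto simp: card_gt_0_iff)
        ultimately show ?thesis using high by simp
      qed
      have "\<forall>r. (p,r) \<in> N \<longleftrightarrow> (p,r) \<in> N'"
      proof (intro allI iffI)
        fix r assume pr: "(p,r) \<in> N"
        then obtain b where pb: "(p,b) \<in> N'" using dom by blast
        have "r = b" by (rule uniq_step[OF ps1 ps2 rng IH pr pb])
        then show "(p,r) \<in> N'" using pb by simp
      next
        fix r assume pr: "(p,r) \<in> N'"
        then obtain b where pb: "(p,b) \<in> N" using dom by blast
        have rng': "\<forall>a\<in>P. a \<in> Range N' \<longleftrightarrow> a \<in> Range N" using rng by blast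
        have IH': "\<forall>q<p. \<forall>r. (q,r) \<in> N' \<longleftrightarrow> (q,r) \<in> N" using IH by blast
        have "r = b" by (rule uniq_step[OF ps2 ps1 rng' IH' pr pb])
        then show "(p,r) \<in> N" using pb by simp
      qed
      then show "st p = st' p \<and> (\<forall>r. (p,r) \<in> N \<longleftrightarrow> (p,r) \<in> N')" using stp by blast
    qed
  qed
  have "N = N'"
  proof (intro set_eqI)
    fix x :: "nat \<times> nat"
    obtain p r where x: "x = (p,r)" by fastforce
    show "x \<in> N \<longleftrightarrow> x \<in> N'"
      using main[of p] ps_sub[OF ps1, of p r] ps_sub[OF ps2, of p r] x by blast
  qed
  then show ?thesis using main by blast
qed



lemma sum_ge_card:
  assumes "finite S" "\<forall>u\<in>S. 1 \<le> (m u :: nat)"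
  shows "card S \<le> sum m S"
proof -
  have "card S = (\<Sum>u\<in>S. 1)" by simp
  also have "\<dots> \<le> sum m S" by (rule sum_mono) (use assms in auto)
  finally show ?thesis .
qed

lemma pstruct_exists:
  assumes "finite P" "card P = k"
  and pf: "\<forall>v\<in>P. card {u\<in>P. u \<le> v} \<le> (\<Sum>u\<in>{u\<in>P. u \<le> v}. m u)"
  and tot: "(\<Sum>u\<in>P. m u) = card P"
  shows "\<exists>N st. pstruct P N st \<and> (\<forall>v\<in>P. card {p\<in>P. st p = v} = m v)"
  using assms
proof (induction k arbitrary: P m)
  case 0
  then have "P = {}" by simp
  then show ?case unfolding pstruct_def by auto
next
  case (Suc k)
  note fin = \<open>finite P\<close>
  have ne: "P \<noteq> {}" using Suc.prems by auto
  define a where "a = Min P"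
  have aP: "a \<in> P" using fin ne unfolding a_def by simp
  have amin: "\<forall>u\<in>P. a \<le> u" using fin unfolding a_def by simp
  define P' where "P' = P - {a}"
  have finP': "finite P'" using fin unfolding P'_def by simp
  have cardP': "card P' = k" using Suc.prems aP unfolding P'_def by simp
  have P'sub: "P' \<subseteq> P" and aP': "a \<notin> P'" unfolding P'_def by auto
  have Pa: "P = insert a P'" using aP unfolding P'_def by auto
  have P'gt: "\<forall>u\<in>P'. a < u" using amin unfolding P'_def by force
  have ma: "1 \<le> m a"
  proof -
    have "{u\<in>P. u \<le> a} = {a}" using amin aP by force
    then show ?thesis using Suc.prems(3) aP by force
  qed
  have sumP: "(\<Sum>u\<in>P. g u) = g a + (\<Sum>u\<in>P'. g u)" for g :: "nat \<Rightarrow> nat"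
    unfolding Pa using finP' aP' by simp
  have prefix: "{u\<in>P. u \<le> v} = insert a {u\<in>P'. u \<le> v}" if "v \<in> P'" for v
    using that P'gt Pa by force
  have prefix_sum: "(\<Sum>u\<in>{u\<in>P. u \<le> v}. g u) = g a + (\<Sum>u\<in>{u\<in>P'. u \<le> v}. g u)" if "v \<in> P'"
    for v and g :: "nat \<Rightarrow> nat"
    unfolding prefix[OF that] using finP' aP' by simp
  have prefix_card: "card {u\<in>P. u \<le> v} = 1 + card {u\<in>P'. u \<le> v}" if "v \<in> P'" for v
    unfolding prefix[OF that] using finP' aP' by simp
  show ?case
  proof (cases "m a = 1")
    case True
    have pf': "\<forall>v\<in>P'. card {u\<in>P'. u \<le> v} \<le> (\<Sum>u\<in>{u\<in>P'. u \<le> v}. m u)"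
    proof
      fix v assume v: "v \<in> P'"
      have "card {u\<in>P. u \<le> v} \<le> (\<Sum>u\<in>{u\<in>P. u \<le> v}. m u)" using Suc.prems(3) v P'sub by blast
      then show "card {u\<in>P'. u \<le> v} \<le> (\<Sum>u\<in>{u\<in>P'. u \<le> v}. m u)"
        using prefix_sum[OF v, of m] prefix_card[OF v] True by simp
    qed
    have tot': "(\<Sum>u\<in>P'. m u) = card P'" using Suc.prems(4) sumP[of m] True cardP' Suc.prems(2) by simp
    obtain N st where N: "pstruct P' N st" and cN: "\<forall>v\<in>P'. card {p\<in>P'. st p = v} = m v"
      using Suc.IH[OF finP' cardP' pf' tot'] by blast
    define st2 where "st2 = st(a := a)"
    have "pstruct P N st2"
      unfolding pstruct_def
    proof (intro conjI)
      show "N \<subseteq> P \<times> P" using ps_sub[OF N] P'sub by auto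
      show "\<forall>(p,q)\<in>N. p < q" using ps_lt[OF N] by blast
      show "\<forall>p q q'. (p,q)\<in>N \<longrightarrow> (p,q')\<in>N \<longrightarrow> q = q'" using ps_fun[OF N] by blast
      show "\<forall>p p' q. (p,q)\<in>N \<longrightarrow> (p',q)\<in>N \<longrightarrow> p = p'" using ps_inj[OF N] by blast
      show "\<forall>p q p' q'. (p,q)\<in>N \<longrightarrow> (p',q')\<in>N \<longrightarrow> p < p' \<longrightarrow> q < q'" using ps_mono[OF N] by blast
      show "\<forall>p\<in>P. st2 p \<in> P \<and> (st2 p, p) \<in> N\<^sup>* \<and> st2 p \<notin> Range N"
      proof
        fix p assume p: "p \<in> P"
        show "st2 p \<in> P \<and> (st2 p, p) \<in> N\<^sup>* \<and> st2 p \<notin> Range N"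
        proof (cases "p = a")
          case True
          have "a \<notin> Range N" using ps_sub[OF N] aP' by blast
          then show ?thesis using True aP unfolding st2_def by simp
        next
          case False
          then have "p \<in> P'" using p Pa by blast
          then show ?thesis using ps_st[OF N] False P'sub unfolding st2_def by auto
        qed
      qed
    qed
    moreover have "\<forall>v\<in>P. card {p\<in>P. st2 p = v} = m v"
    proof
      fix v assume v: "v \<in> P"
      show "card {p\<in>P. st2 p = v} = m v"
      proof (cases "v = a")
        case True
        have "{p\<in>P. st2 p = v} = {a}"
          using True Pa ps_st[OF N] aP' unfolding st2_def by auto
        then show ?thesis using \<open>m a = 1\<close> True by simp
      next
        case False
        then have "v \<in> P'" using v Pa by blast
        have "{p\<in>P. st2 p = v} = {p\<in>P'. st p = v}"
          using False Pa aP' unfolding st2_def by auto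
        then show ?thesis using cN \<open>v \<in> P'\<close> by simp
      qed
    qed
    ultimately show ?thesis by blast
  next
    case False
    then have ma2: "m a \<ge> 2" using ma by simp
    have "\<exists>r\<in>P. m r = 0"
    proof (rule ccontr)
      assume "\<not> (\<exists>r\<in>P. m r = 0)"
      then have "\<forall>u\<in>P'. 1 \<le> m u"
      proof (intro ballI)
        fix u assume u: "u \<in> P'" and nz: "\<not> (\<exists>r\<in>P. m r = 0)"
        have uP: "u \<in> P" using u P'sub by blast
        have "m u \<noteq> 0" using uP nz by auto
        then show "1 \<le> m u" by simp
      qed
      then have "card P' \<le> (\<Sum>u\<in>P'. m u)" using sum_ge_card finP' by blast
      then show False using sumP[of m] Suc.prems(4) ma2 Suc.prems(2) cardP' by simp
    qed
    define r where "r = Min {u\<in>P. m u = 0}"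
    have rset: "r \<in> {u\<in>P. m u = 0}" unfolding r_def
      by (rule Min_in) (use fin \<open>\<exists>r\<in>P. m r = 0\<close> in auto)
    have rmin: "\<forall>u\<in>P. m u = 0 \<longrightarrow> r \<le> u" unfolding r_def using fin by auto
    have rP': "r \<in> P'" using rset ma2 Pa by auto
    define m' where "m' = m(r := m a - 1)"
    have sum_upd: "(\<Sum>u\<in>S. m' u) = (m a - 1) + (\<Sum>u\<in>S. m u)" if "finite S" "r \<in> S" for S
    proof -
      have "(\<Sum>u\<in>S. m' u) = m' r + (\<Sum>u\<in>S - {r}. m' u)" using that by (simp add: sum.remove)
      moreover have "(\<Sum>u\<in>S. m u) = m r + (\<Sum>u\<in>S - {r}. m u)" using that by (simp add: sum.remove)
      moreover have "(\<Sum>u\<in>S - {r}. m' u) = (\<Sum>u\<in>S - {r}. m u)" unfolding m'_def by (rule sum.cong) auto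
      ultimately show ?thesis using rset unfolding m'_def by simp
    qed
    have pf': "\<forall>v\<in>P'. card {u\<in>P'. u \<le> v} \<le> (\<Sum>u\<in>{u\<in>P'. u \<le> v}. m' u)"
    proof
      fix v assume v: "v \<in> P'"
      show "card {u\<in>P'. u \<le> v} \<le> (\<Sum>u\<in>{u\<in>P'. u \<le> v}. m' u)"
      proof (cases "v < r")
        case True
        have "\<forall>u\<in>{u\<in>P'. u \<le> v}. 1 \<le> m' u"
        proof
          fix u assume u: "u \<in> {u\<in>P'. u \<le> v}"
          then have "u < r" "u \<in> P" using True P'sub by auto
          have "m u \<noteq> 0"
          proof
            assume "m u = 0" then have "r \<le> u" using rmin \<open>u \<in> P\<close> by blast
            then show False using \<open>u < r\<close> by simp
          qed
          then show "1 \<le> m' u" using \<open>u < r\<close> unfolding m'_def by simp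
        qed
        then show ?thesis using sum_ge_card[of "{u\<in>P'. u \<le> v}" m'] finP' by simp
      next
        case False
        have r_in: "r \<in> {u\<in>P'. u \<le> v}" using False rP' by simp
        have "card {u\<in>P. u \<le> v} \<le> (\<Sum>u\<in>{u\<in>P. u \<le> v}. m u)" using Suc.prems(3) v P'sub by blast
        then show ?thesis
          using prefix_sum[OF v, of m] prefix_card[OF v] sum_upd[OF _ r_in] finP' by simp
      qed
    qed
    have tot': "(\<Sum>u\<in>P'. m' u) = card P'"
      using sum_upd[OF finP' rP'] sumP[of m] Suc.prems(4) Suc.prems(2) cardP' ma2 by simp
    obtain N st where N: "pstruct P' N st" and cN: "\<forall>v\<in>P'. card {p\<in>P'. st p = v} = m' v"
      using Suc.IH[OF finP' cardP' pf' tot'] by blast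
    have NP': "N \<subseteq> P' \<times> P'" using ps_sub[OF N] by auto
    have r_notR: "r \<notin> Range N"
    proof -
      have "card {p\<in>P'. st p = r} = m a - 1" using cN rP' unfolding m'_def by simp
      then have "card {p\<in>P'. st p = r} > 0" using ma2 by simp
      then obtain p where "p \<in> P'" "st p = r" by (auto simp: card_gt_0_iff)
      then show ?thesis using ps_st[OF N] by metis
    qed
    have rng_gt: "r < q" if "q \<in> Range N" for q
    proof -
      have qP': "q \<in> P'" using that NP' by blast
      have "{p\<in>P'. st p = q} = {}" using ps_st[OF N] that by blast
      moreover have "m' q = card {p\<in>P'. st p = q}" using cN qP' by simp
      ultimately have "m' q = 0" by (metis card.empty)
      moreover have "q \<noteq> r" using r_notR that by blast
      ultimately have "m q = 0" unfolding m'_def by simp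
      then have "r \<le> q" using rmin qP' P'sub by blast
      then show ?thesis using \<open>q \<noteq> r\<close> by simp
    qed
    define N2 where "N2 = insert (a, r) N"
    define st2 where "st2 = (\<lambda>p. if p = a then a else if st p = r then a else st p)"
    have aD: "a \<notin> Domain N" and aR: "a \<notin> Range N" using NP' aP' by auto
    have "pstruct P N2 st2"
      unfolding pstruct_def
    proof (intro conjI)
      show "N2 \<subseteq> P \<times> P" using NP' P'sub aP rP' unfolding N2_def by blast
      show "\<forall>(p,q)\<in>N2. p < q" using ps_lt[OF N] P'gt rP' unfolding N2_def by auto
      show "\<forall>p q q'. (p,q)\<in>N2 \<longrightarrow> (p,q')\<in>N2 \<longrightarrow> q = q'"
        using ps_fun[OF N] aD unfolding N2_def by blast
      show "\<forall>p p' q. (p,q)\<in>N2 \<longrightarrow> (p',q)\<in>N2 \<longrightarrow> p = p'"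
        using ps_inj[OF N] r_notR unfolding N2_def by blast
      show "\<forall>p q p' q'. (p,q)\<in>N2 \<longrightarrow> (p',q')\<in>N2 \<longrightarrow> p < p' \<longrightarrow> q < q'"
      proof (intro allI impI)
        fix p q p' q' assume h: "(p,q)\<in>N2" "(p',q')\<in>N2" "p < p'"
        show "q < q'"
        proof (cases "(p',q') = (a,r)")
          case True
          then have "(p,q) \<in> N" using h P'gt unfolding N2_def by auto
          then have "p \<in> P'" using ps_sub[OF N] by blast
          then show ?thesis using h True P'gt by auto
        next
          case False
          then have h2: "(p',q') \<in> N" using h unfolding N2_def by auto
          show ?thesis
          proof (cases "(p,q) = (a,r)")
            case True then show ?thesis using rng_gt h2 by auto
          next
            case False then show ?thesis using h h2 ps_mono[OF N] unfolding N2_def by auto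
          qed
        qed
      qed
      show "\<forall>p\<in>P. st2 p \<in> P \<and> (st2 p, p) \<in> N2\<^sup>* \<and> st2 p \<notin> Range N2"
      proof
        fix p assume p: "p \<in> P"
        have mono: "N\<^sup>* \<subseteq> N2\<^sup>*" unfolding N2_def by (rule rtrancl_mono) auto
        have aR2: "a \<notin> Range N2" using aR P'gt rP' unfolding N2_def by auto
        show "st2 p \<in> P \<and> (st2 p, p) \<in> N2\<^sup>* \<and> st2 p \<notin> Range N2"
        proof (cases "p = a")
          case True then show ?thesis using aP aR2 unfolding st2_def by simp
        next
          case False
          then have p': "p \<in> P'" using p Pa by blast
          show ?thesis
          proof (cases "st p = r")
            case True
            have "(r, p) \<in> N\<^sup>*" using ps_st[OF N p'] True by simp
            then have "(r, p) \<in> N2\<^sup>*" using mono by blast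
            moreover have "(a, r) \<in> N2" unfolding N2_def by simp
            ultimately have "(a, p) \<in> N2\<^sup>*" by (meson converse_rtrancl_into_rtrancl)
            then show ?thesis using True False aP aR2 unfolding st2_def by simp
          next
            case False2: False
            have "st p \<in> P'" "(st p, p) \<in> N\<^sup>*" "st p \<notin> Range N" using ps_st[OF N p'] by auto
            then show ?thesis using False False2 mono P'sub unfolding st2_def N2_def by auto
          qed
        qed
      qed
    qed
    moreover have "\<forall>v\<in>P. card {p\<in>P. st2 p = v} = m v"
    proof
      fix v assume v: "v \<in> P"
      have stP': "st p \<in> P'" if "p \<in> P'" for p using ps_st[OF N that] by blast
      show "card {p\<in>P. st2 p = v} = m v"
      proof (cases "v = a")
        case True
        have "{p\<in>P. st2 p = v} = insert a {p\<in>P'. st p = r}"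
          using True Pa stP' aP' unfolding st2_def by auto
        then have "card {p\<in>P. st2 p = v} = 1 + card {p\<in>P'. st p = r}" using finP' aP' by simp
        also have "\<dots> = m a" using cN rP' ma2 unfolding m'_def by simp
        finally show ?thesis using True by simp
      next
        case False
        then have v': "v \<in> P'" using v Pa by blast
        show ?thesis
        proof (cases "v = r")
          case True
          have "{p\<in>P. st2 p = v} = {}" using True False rP' aP' unfolding st2_def by auto
          then have "card {p\<in>P. st2 p = v} = 0" by (metis card.empty)
          then show ?thesis using True rset by simp
        next
          case False2: False
          have "{p\<in>P. st2 p = v} = {p\<in>P'. st p = v}"
            using False False2 Pa aP' unfolding st2_def by auto
          then show ?thesis using cN v' False2 unfolding m'_def by simp
        qed
      qed
    qed
    ultimately show ?thesis by blast
  qed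
qed


definition stair_ok :: "nat \<Rightarrow> nat \<Rightarrow> (nat \<Rightarrow> nat) \<Rightarrow> (nat \<Rightarrow> real) \<Rightarrow> bool" where
  "stair_ok b n g y \<longleftrightarrow> (\<forall>p q. b \<le> p \<longrightarrow> 1 \<le> p \<longrightarrow> p < q \<longrightarrow> q \<le> n \<longrightarrow>
      y q < y p \<and> (1 < y p - y q \<longleftrightarrow> g p \<le> q) \<and> y p - y q \<noteq> 1)"

lemma stair_step:
  assumes gp: "\<forall>p\<in>{1..n}. p < g p \<and> g p \<le> n + 1"
  and gm: "\<forall>p q. 1 \<le> p \<longrightarrow> p \<le> q \<longrightarrow> q \<le> n \<longrightarrow> g p \<le> g q"
  and ok: "stair_ok (Suc a) n g y" and a: "1 \<le> a" "a < n"
  shows "\<exists>y'. stair_ok a n g y'"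
proof -
  have ga: "a < g a" "g a \<le> n + 1" using gp a by auto
  have IH: "y q < y p \<and> (1 < y p - y q \<longleftrightarrow> g p \<le> q) \<and> y p - y q \<noteq> 1"
    if "Suc a \<le> p" "p < q" "q \<le> n" for p q
    using ok that unfolding stair_ok_def by auto
  have yle: "y q \<le> y p" if "Suc a \<le> p" "p \<le> q" "q \<le> n" for p q
    using IH[of p q] that by (cases "p = q") auto
  define lo where "lo = (if g a \<le> n then max (y (Suc a)) (1 + y (g a)) else y (Suc a))"
  define hi where "hi = (if Suc a < g a then 1 + y (g a - 1) else lo + 1)"
  define v where "v = (lo + hi) / 2"
  have lohi: "lo < hi"
  proof (cases "Suc a < g a")
    case True
    have h: "hi = 1 + y (g a - 1)" using True unfolding hi_def by simp
    have "y (Suc a) < 1 + y (g a - 1)"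
    proof (cases "Suc a = g a - 1")
      case True then show ?thesis by simp
    next
      case False
      then have lt: "Suc a < g a - 1" using \<open>Suc a < g a\<close> by simp
      have "g a \<le> g (Suc a)" using gm a by simp
      then have "\<not> g (Suc a) \<le> g a - 1" using ga by simp
      moreover have le: "g a - 1 \<le> n" using ga by simp
      ultimately have "\<not> 1 < y (Suc a) - y (g a - 1)" "y (Suc a) - y (g a - 1) \<noteq> 1"
        using IH[of "Suc a" "g a - 1"] lt by auto
      then show ?thesis by linarith
    qed
    moreover have "1 + y (g a) < 1 + y (g a - 1)" if "g a \<le> n"
      using IH[of "g a - 1" "g a"] that True by simp
    ultimately show ?thesis unfolding lo_def h by auto
  next
    case False then show ?thesis unfolding hi_def by simp
  qed
  have v: "lo < v" "v < hi" using lohi unfolding v_def by auto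
  define y' where "y' = y(a := v)"
  have "stair_ok a n g y'"
    unfolding stair_ok_def
  proof (intro allI impI)
    fix p q assume h: "a \<le> p" "1 \<le> p" "p < q" "q \<le> n"
    show "y' q < y' p \<and> (1 < y' p - y' q \<longleftrightarrow> g p \<le> q) \<and> y' p - y' q \<noteq> 1"
    proof (cases "p = a")
      case False
      then show ?thesis using IH[of p q] h unfolding y'_def by auto
    next
      case True
      have yq: "y' q = y q" "y' p = v" using True h unfolding y'_def by auto
      have "lo \<ge> y (Suc a)" unfolding lo_def by auto
      moreover have "y q \<le> y (Suc a)" using yle[of "Suc a" q] h True by simp
      ultimately have lt: "y q < v" using v by simp
      show ?thesis
      proof (cases "g a \<le> q")
        case True
        then have "g a \<le> n" using h by simp
        then have "lo \<ge> 1 + y (g a)" unfolding lo_def by simp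
        moreover have "y q \<le> y (g a)" using yle[of "g a" q] True ga h by simp
        ultimately have "1 < v - y q" using v by simp
        then show ?thesis using yq lt True \<open>p = a\<close> by simp
      next
        case False
        then have "Suc a < g a" using h \<open>p = a\<close> by simp
        then have "hi = 1 + y (g a - 1)" unfolding hi_def by simp
        moreover have "y (g a - 1) \<le> y q" using yle[of q "g a - 1"] False h ga \<open>p = a\<close> by simp
        ultimately have "v - y q < 1" using v by simp
        then show ?thesis using yq lt False \<open>p = a\<close> by simp
      qed
    qed
  qed
  then show ?thesis by blast
qed

lemma stair_exists:
  assumes gp: "\<forall>p\<in>{1..n}. p < g p \<and> g p \<le> n + 1"
  and gm: "\<forall>p q. 1 \<le> p \<longrightarrow> p \<le> q \<longrightarrow> q \<le> n \<longrightarrow> g p \<le> g q"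
  shows "\<exists>y. stair_ok 1 n g y"
proof -
  have "\<exists>y. stair_ok (n - k) n g y" for k
  proof (induction k)
    case 0
    have "stair_ok n n g (\<lambda>_. 0)" unfolding stair_ok_def by auto
    then show ?case by auto
  next
    case (Suc k)
    then obtain y where y: "stair_ok (n - k) n g y" by blast
    show ?case
    proof (cases "n - Suc k \<ge> 1")
      case True
      then have "Suc (n - Suc k) = n - k" "n - Suc k < n" by auto
      then show ?thesis using stair_step[OF gp gm, of "n - Suc k" y] y True by auto
    next
      case False
      then have "n - k \<le> 1" by simp
      then have "stair_ok (n - Suc k) n g y" using y unfolding stair_ok_def by auto
      then show ?thesis by blast
    qed
  qed
  from this[of "n - 1"] show ?thesis
    by (cases n) (auto simp: stair_ok_def)
qed


definition cell :: "nat \<Rightarrow> (nat \<Rightarrow> real) \<Rightarrow> (nat \<Rightarrow> real) set" where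
  "cell n x = {y \<in> shi_complement n. \<forall>i j. 1 \<le> i \<longrightarrow> i < j \<longrightarrow> j \<le> n \<longrightarrow>
      (y i < y j \<longleftrightarrow> x i < x j) \<and> (1 < y i - y j \<longleftrightarrow> 1 < x i - x j)}"

lemma convex_lt:
  fixes a b c t :: real
  assumes "0 \<le> t" "t \<le> 1" "a < c" "b < c"
  shows "(1 - t) * a + t * b < c"
proof (cases "t = 0")
  case True then show ?thesis using assms by simp
next
  case False
  then have "t * b < t * c" using assms by (simp add: mult_strict_left_mono)
  moreover have "(1 - t) * a \<le> (1 - t) * c" using assms by (simp add: mult_left_mono)
  ultimately show ?thesis by (simp add: algebra_simps)
qed

lemma convex_gt:
  fixes a b c t :: real
  assumes "0 \<le> t" "t \<le> 1" "c < a" "c < b"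
  shows "c < (1 - t) * a + t * b"
  using convex_lt[of t "-a" "-c" "-b"] assms by (simp add: algebra_simps)

lemma connected_side:
  fixes S :: "real set"
  assumes "connected S" "a \<in> S" "b \<in> S" "c \<notin> S"
  shows "a < c \<longleftrightarrow> b < c"
  using connectedD_interval[OF assms(1) assms(2) assms(3), of c]
        connectedD_interval[OF assms(1) assms(3) assms(2), of c] assms(4)
  by (metis less_le_not_le linorder_le_cases)

lemma complement_distinct:
  assumes "x \<in> shi_complement n" "i \<in> {1..n}" "j \<in> {1..n}" "i \<noteq> j"
  shows "x i \<noteq> x j"
proof (cases "i < j")
  case True then show ?thesis using assms unfolding shi_complement_def by auto
next
  case False then have "j < i" using assms by simp
  then show ?thesis using assms unfolding shi_complement_def by force
qed

lemma cell_sub_comp: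
  assumes x: "x \<in> shi_complement n" and y: "y \<in> cell n x"
  shows "connected_component (shi_complement n) x y"
proof -
  define \<gamma> where "\<gamma> = (\<lambda>t::real. (\<lambda>i. (1 - t) * x i + t * y i))"
  have cont: "continuous_on {0..1} \<gamma>"
    unfolding \<gamma>_def by (intro continuous_on_coordinatewise_then_product continuous_intros)
  have conn: "connected (\<gamma> ` {0..1})" by (rule connected_continuous_image[OF cont connected_Icc])
  have yc: "y \<in> shi_complement n" using y unfolding cell_def by blast
  have sub: "\<gamma> ` {0..1} \<subseteq> shi_complement n"
  proof
    fix z assume "z \<in> \<gamma> ` {0..1}"
    then obtain t where t: "0 \<le> t" "t \<le> 1" "z = \<gamma> t" by auto
    have sp: "z \<in> shi_space n" using x yc t unfolding shi_complement_def shi_space_def \<gamma>_def by auto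
    have "z i - z j \<noteq> 0 \<and> z i - z j \<noteq> 1" if ij: "1 \<le> i" "i < j" "j \<le> n" for i j
    proof -
      have d: "z i - z j = (1 - t) * (x i - x j) + t * (y i - y j)"
        using t unfolding \<gamma>_def by (simp add: algebra_simps)
      have cx: "x i - x j \<noteq> 0" "x i - x j \<noteq> 1" using x ij unfolding shi_complement_def by auto
      have cy: "y i - y j \<noteq> 0" "y i - y j \<noteq> 1" using yc ij unfolding shi_complement_def by auto
      have o1: "y i < y j \<longleftrightarrow> x i < x j" and o2: "1 < y i - y j \<longleftrightarrow> 1 < x i - x j"
        using y ij unfolding cell_def by auto
      consider "x i - x j < 0" | "0 < x i - x j \<and> x i - x j < 1" | "1 < x i - x j"
        using cx by linarith
      then show ?thesis
      proof cases
        case 1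
        then have "y i - y j < 0" using o1 by simp
        then have "z i - z j < 0" using convex_lt[OF t(1,2) 1] d by simp
        then show ?thesis by simp
      next
        case 2
        then have "0 < y i - y j \<and> y i - y j < 1" using o1 o2 cy by auto
        then have "0 < z i - z j" "z i - z j < 1"
          using convex_gt[OF t(1,2), of 0 "x i - x j" "y i - y j"] convex_lt[OF t(1,2), of "x i - x j" 1 "y i - y j"] d 2
          by auto
        then show ?thesis by simp
      next
        case 3
        then have "1 < y i - y j" using o2 by simp
        then have "1 < z i - z j" using convex_gt[OF t(1,2) 3] d by simp
        then show ?thesis by simp
      qed
    qed
    then show "z \<in> shi_complement n" using sp unfolding shi_complement_def by auto
  qed
  have "x \<in> \<gamma> ` {0..1}" by (rule image_eqI[of _ _ 0]) (auto simp: \<gamma>_def)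
  moreover have "y \<in> \<gamma> ` {0..1}" by (rule image_eqI[of _ _ 1]) (auto simp: \<gamma>_def)
  ultimately show ?thesis using connected_componentI[OF conn sub] by blast
qed

lemma comp_sub_cell:
  assumes x: "x \<in> shi_complement n" and c: "connected_component (shi_complement n) x y"
  shows "y \<in> cell n x"
proof -
  obtain T where T: "connected T" "T \<subseteq> shi_complement n" "x \<in> T" "y \<in> T"
    using c unfolding connected_component_def by blast
  have yc: "y \<in> shi_complement n" using T by blast
  have "(y i < y j \<longleftrightarrow> x i < x j) \<and> (1 < y i - y j \<longleftrightarrow> 1 < x i - x j)"
    if ij: "1 \<le> i" "i < j" "j \<le> n" for i j
  proof -
    define \<phi> where "\<phi> = (\<lambda>z::nat \<Rightarrow> real. z i - z j)"
    have "continuous_on T \<phi>" unfolding \<phi>_def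
      by (intro continuous_intros continuous_on_subset[OF continuous_on_product_coordinates]) auto
    then have conn: "connected (\<phi> ` T)" using T(1) connected_continuous_image by blast
    have nz: "0 \<notin> \<phi> ` T" "1 \<notin> \<phi> ` T" using T(2) ij unfolding \<phi>_def shi_complement_def by auto
    have "\<phi> x \<in> \<phi> ` T" "\<phi> y \<in> \<phi> ` T" using T by auto
    then have "\<phi> y < 0 \<longleftrightarrow> \<phi> x < 0" "\<phi> y < 1 \<longleftrightarrow> \<phi> x < 1"
      using connected_side[OF conn] nz by blast+
    moreover have "\<phi> y \<noteq> 1" "\<phi> x \<noteq> 1" using nz T by auto
    ultimately show ?thesis unfolding \<phi>_def by auto
  qed
  then show ?thesis using yc unfolding cell_def by blast
qed

lemma comp_eq_cell:
  assumes x: "x \<in> shi_complement n"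
  shows "connected_component_set (shi_complement n) x = cell n x"
  using cell_sub_comp[OF x] comp_sub_cell[OF x] by blast

lemma regions_eq: "shi_regions n = {cell n x | x. x \<in> shi_complement n}"
  unfolding shi_regions_def using comp_eq_cell by blast

lemma cell_self: "x \<in> shi_complement n \<Longrightarrow> x \<in> cell n x"
  unfolding cell_def by auto

lemma cell_order:
  assumes x: "x \<in> shi_complement n" and y: "y \<in> cell n x" and i: "i \<in> {1..n}" and j: "j \<in> {1..n}"
  shows "y i < y j \<longleftrightarrow> x i < x j"
proof -
  have yc: "y \<in> shi_complement n" using y unfolding cell_def by blast
  consider "i < j" | "i = j" | "j < i" by linarith
  then show ?thesis
  proof cases
    case 1 then show ?thesis using y i j unfolding cell_def by auto
  next
    case 2 then show ?thesis by simp
  next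
    case 3
    then have "y j < y i \<longleftrightarrow> x j < x i" using y i j unfolding cell_def by auto
    moreover have "y i \<noteq> y j" "x i \<noteq> x j" using complement_distinct[OF yc i j] complement_distinct[OF x i j] 3 by auto
    ultimately show ?thesis by auto
  qed
qed

lemma cell_arcs:
  assumes x: "x \<in> shi_complement n"
  shows "shi_arcs n (cell n x) = {(i,j). 1 \<le> i \<and> i < j \<and> j \<le> n \<and> 1 < x i - x j}"
  unfolding shi_arcs_def using cell_self[OF x] unfolding cell_def by auto

lemma cell_eqI:
  assumes "\<forall>i j. 1 \<le> i \<longrightarrow> i < j \<longrightarrow> j \<le> n \<longrightarrow> (x1 i < x1 j \<longleftrightarrow> x2 i < x2 j) \<and> (1 < x1 i - x1 j \<longleftrightarrow> 1 < x2 i - x2 j)"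
  shows "cell n x1 = cell n x2"
  using assms unfolding cell_def by auto


definition rank :: "nat \<Rightarrow> (nat \<Rightarrow> real) \<Rightarrow> nat \<Rightarrow> nat" where
  "rank n x i = Suc (card {j\<in>{1..n}. x i < x j})"

context
  fixes n x
  assumes x: "x \<in> shi_complement n"
begin

lemma rank_lt:
  assumes i: "i \<in> {1..n}" and j: "j \<in> {1..n}" and lt: "x i < x j"
  shows "rank n x j < rank n x i"
proof -
  have "{k\<in>{1..n}. x j < x k} \<subset> {k\<in>{1..n}. x i < x k}"
    using lt j by auto
  then have "card {k\<in>{1..n}. x j < x k} < card {k\<in>{1..n}. x i < x k}"
    by (rule psubset_card_mono[rotated]) simp
  then show ?thesis unfolding rank_def by simp
qed

lemma rank_iff:
  assumes i: "i \<in> {1..n}" and j: "j \<in> {1..n}"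
  shows "rank n x i < rank n x j \<longleftrightarrow> x j < x i"
proof
  assume r: "rank n x i < rank n x j"
  show "x j < x i"
  proof (rule ccontr)
    assume "\<not> x j < x i"
    moreover have "i \<noteq> j" using r by auto
    ultimately have "x i < x j" using complement_distinct[OF x i j] by auto
    then show False using rank_lt[OF i j] r by simp
  qed
next
  assume "x j < x i" then show "rank n x i < rank n x j" using rank_lt[OF j i] by simp
qed

lemma rank_inj: "inj_on (rank n x) {1..n}"
proof (rule inj_onI)
  fix i j assume i: "i \<in> {1..n}" and j: "j \<in> {1..n}" and e: "rank n x i = rank n x j"
  show "i = j"
  proof (rule ccontr)
    assume "i \<noteq> j"
    then have "x i \<noteq> x j" using complement_distinct[OF x i j] by simp
    then show False using rank_lt[OF i j] rank_lt[OF j i] e by (cases "x i < x j") auto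
  qed
qed

lemma rank_range: "i \<in> {1..n} \<Longrightarrow> rank n x i \<in> {1..n}"
proof -
  assume i: "i \<in> {1..n}"
  have "{j\<in>{1..n}. x i < x j} \<subseteq> {1..n} - {i}" by auto
  then have "card {j\<in>{1..n}. x i < x j} \<le> card ({1..n} - {i})" by (rule card_mono[rotated]) simp
  also have "\<dots> = n - 1" using i by simp
  finally show ?thesis using i unfolding rank_def by auto
qed

lemma rank_bij: "bij_betw (rank n x) {1..n} {1..n}"
proof -
  have "rank n x ` {1..n} \<subseteq> {1..n}" using rank_range by auto
  moreover have "card (rank n x ` {1..n}) = card {1..n::nat}" using card_image[OF rank_inj] by simp
  ultimately have "rank n x ` {1..n} = {1..n}" by (intro card_subset_eq) auto
  then show ?thesis using rank_inj unfolding bij_betw_def by simp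
qed

definition wperm :: "nat \<Rightarrow> nat" where
  "wperm p = (if p \<in> {1..n} then inv_into {1..n} (rank n x) p else 0)"

lemma wperm_rank: "i \<in> {1..n} \<Longrightarrow> wperm (rank n x i) = i"
  using rank_bij rank_range unfolding wperm_def by (simp add: bij_betw_inv_into_left)

lemma rank_wperm: "p \<in> {1..n} \<Longrightarrow> rank n x (wperm p) = p"
  using rank_bij unfolding wperm_def by (simp add: bij_betw_inv_into_right)

lemma wperm_range: "p \<in> {1..n} \<Longrightarrow> wperm p \<in> {1..n}"
  using rank_bij unfolding wperm_def by (metis bij_betw_def inv_into_into)

lemma perm_cell: "shi_perm n (cell n x) = wperm"
  unfolding shi_perm_def
proof (rule the_equality)
  have bw: "bij_betw wperm {1..n} {1..n}"
  proof -
    have "bij_betw (inv_into {1..n} (rank n x)) {1..n} {1..n}" using rank_bij by (rule bij_betw_inv_into)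
    then show ?thesis unfolding wperm_def by (rule bij_betw_cong[THEN iffD1, rotated]) auto
  qed
  have ord: "x (wperm q) < x (wperm p)" if "1 \<le> p" "p < q" "q \<le> n" for p q
  proof -
    have "rank n x (wperm p) < rank n x (wperm q)" using rank_wperm that by simp
    then show ?thesis using rank_iff wperm_range that by simp
  qed
  show "bij_betw wperm {1..n} {1..n} \<and> (\<forall>p. p \<notin> {1..n} \<longrightarrow> wperm p = 0) \<and>
    (\<forall>y\<in>cell n x. \<forall>p q. 1 \<le> p \<longrightarrow> p < q \<longrightarrow> q \<le> n \<longrightarrow> y (wperm q) < y (wperm p))"
  proof (intro conjI ballI allI impI)
    show "bij_betw wperm {1..n} {1..n}" by (rule bw)
  next
    fix p assume "p \<notin> {1..n}" then show "wperm p = 0" unfolding wperm_def by auto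
  next
    fix y p q assume y: "y \<in> cell n x" and h: "1 \<le> p" "p < q" "q \<le> n"
    show "y (wperm q) < y (wperm p)"
      using cell_order[OF x y, of "wperm q" "wperm p"] wperm_range h ord by simp
  qed
next
  fix w assume w: "bij_betw w {1..n} {1..n} \<and> (\<forall>p. p \<notin> {1..n} \<longrightarrow> w p = 0) \<and>
    (\<forall>y\<in>cell n x. \<forall>p q. 1 \<le> p \<longrightarrow> p < q \<longrightarrow> q \<le> n \<longrightarrow> y (w q) < y (w p))"
  have ordw: "x (w q) < x (w p)" if "1 \<le> p" "p < q" "q \<le> n" for p q
    using w cell_self[OF x] that by blast
  have winj: "inj_on w {1..n}" using w unfolding bij_betw_def by blast
  have wr: "w p \<in> {1..n}" if "p \<in> {1..n}" for p using w that unfolding bij_betw_def by blast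
  have rk: "rank n x (w p) = p" if p: "p \<in> {1..n}" for p
  proof -
    have "{j\<in>{1..n}. x (w p) < x j} = w ` {q\<in>{1..n}. q < p}"
    proof
      show "w ` {q\<in>{1..n}. q < p} \<subseteq> {j\<in>{1..n}. x (w p) < x j}"
        using ordw wr p by auto
      show "{j\<in>{1..n}. x (w p) < x j} \<subseteq> w ` {q\<in>{1..n}. q < p}"
      proof
        fix j assume j: "j \<in> {j\<in>{1..n}. x (w p) < x j}"
        then obtain q where q: "q \<in> {1..n}" "j = w q" using w unfolding bij_betw_def by blast
        have "q < p"
        proof (rule ccontr)
          assume "\<not> q < p"
          then have "q = p \<or> p < q" by auto
          then show False using ordw[of p q] j q p by auto
        qed
        then show "j \<in> w ` {q\<in>{1..n}. q < p}" using q by auto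
      qed
    qed
    moreover have "card (w ` {q\<in>{1..n}. q < p}) = card {q\<in>{1..n}. q < p}"
      by (rule card_image) (rule inj_on_subset[OF winj], auto)
    moreover have "{q\<in>{1..n}. q < p} = {1..<p}" using p by auto
    ultimately show ?thesis unfolding rank_def using p by simp
  qed
  show "w = wperm"
  proof
    fix p show "w p = wperm p"
    proof (cases "p \<in> {1..n}")
      case True
      then have "wperm (rank n x (w p)) = w p" using wperm_rank wr by simp
      then show ?thesis using rk True by simp
    next
      case False then show ?thesis using w unfolding wperm_def by auto
    qed
  qed
qed

lemma pos_cell: "i \<in> {1..n} \<Longrightarrow> shi_pos n (cell n x) i = rank n x i"
  unfolding shi_pos_def perm_cell
proof (rule the_equality)
  assume i: "i \<in> {1..n}"
  show "rank n x i \<in> {1..n} \<and> wperm (rank n x i) = i" using rank_range[OF i] wperm_rank[OF i] by simp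
  fix p assume "p \<in> {1..n} \<and> wperm p = i"
  then show "p = rank n x i" using rank_wperm by auto
qed

end


definition rootf :: "nat set \<Rightarrow> (nat \<times> nat) set \<Rightarrow> nat \<Rightarrow> nat" where
  "rootf P N = (\<lambda>p. SOME s. s \<in> P \<and> s \<notin> Range N \<and> (s,p) \<in> N\<^sup>*)"

lemma pstruct_intro:
  assumes sub: "N \<subseteq> P \<times> P" and lt: "\<forall>(p,q)\<in>N. p < q"
  and fn: "\<forall>p q q'. (p,q)\<in>N \<longrightarrow> (p,q')\<in>N \<longrightarrow> q = q'"
  and inj: "\<forall>p p' q. (p,q)\<in>N \<longrightarrow> (p',q)\<in>N \<longrightarrow> p = p'"
  and mono: "\<forall>p q p' q'. (p,q)\<in>N \<longrightarrow> (p',q')\<in>N \<longrightarrow> p < p' \<longrightarrow> q < q'"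
  shows "pstruct P N (rootf P N)"
proof -
  have ex: "p \<in> P \<longrightarrow> (\<exists>s. s \<in> P \<and> s \<notin> Range N \<and> (s,p) \<in> N\<^sup>*)" for p
  proof (induction p rule: less_induct)
    case (less p)
    show ?case
    proof
      assume p: "p \<in> P"
      show "\<exists>s. s \<in> P \<and> s \<notin> Range N \<and> (s,p) \<in> N\<^sup>*"
      proof (cases "p \<in> Range N")
        case False then show ?thesis using p by blast
      next
        case True
        then obtain q where q: "(q,p) \<in> N" by blast
        then have "q < p" "q \<in> P" using lt sub by auto
        then obtain s where "s \<in> P" "s \<notin> Range N" "(s,q) \<in> N\<^sup>*" using less by blast
        then show ?thesis using q by (meson rtrancl.rtrancl_into_rtrancl)
      qed
    qed
  qed
  have "\<forall>p\<in>P. rootf P N p \<in> P \<and> (rootf P N p, p) \<in> N\<^sup>* \<and> rootf P N p \<notin> Range N"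
  proof
    fix p assume "p \<in> P"
    then have "\<exists>s. s \<in> P \<and> s \<notin> Range N \<and> (s,p) \<in> N\<^sup>*" using ex by blast
    from someI_ex[OF this] show "rootf P N p \<in> P \<and> (rootf P N p, p) \<in> N\<^sup>* \<and> rootf P N p \<notin> Range N"
      unfolding rootf_def by blast
  qed
  then show ?thesis unfolding pstruct_def using assms by blast
qed

lemma ps_root_unique:
  assumes ps: "pstruct P N st" and p: "p \<in> P"
  shows "rootf P N p = st p"
proof -
  have "\<exists>s. s \<in> P \<and> s \<notin> Range N \<and> (s,p) \<in> N\<^sup>*" using ps_st[OF ps p] by blast
  from someI_ex[OF this] have r: "rootf P N p \<in> P" "rootf P N p \<notin> Range N" "(rootf P N p, p) \<in> N\<^sup>*"
    unfolding rootf_def by blast+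
  show ?thesis using ps_back_unique[OF ps r(3), of "st p"] ps_st[OF ps p] r(2) by blast
qed

lemma ps_same_st_rtrancl:
  assumes ps: "pstruct P N st" and p: "p \<in> P" and q: "q \<in> P" and e: "st p = st q" and le: "p \<le> q"
  shows "(p,q) \<in> N\<^sup>*"
proof -
  have "(st p, p) \<in> N\<^sup>*" "(st p, q) \<in> N\<^sup>*" using ps_st[OF ps p] ps_st[OF ps q] e by auto
  from single_valued_confluent[OF ps_sv[OF ps] this] show ?thesis
    using ps_rtrancl_le[OF ps] le by (metis antisym rtrancl.rtrancl_refl)
qed

definition Kset :: "(nat \<Rightarrow> nat) \<Rightarrow> (nat \<times> nat) set \<Rightarrow> (nat \<times> nat) set" where
  "Kset pos A = {(i,l)\<in>A. \<not> (\<exists>(j,k)\<in>A. (j,k) \<noteq> (i,l) \<and> pos i \<le> pos j \<and> pos k \<le> pos l)}"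

definition Nrel :: "(nat \<Rightarrow> nat) \<Rightarrow> (nat \<times> nat) set \<Rightarrow> (nat \<times> nat) set" where
  "Nrel pos A = (\<lambda>(i,l). (pos i, pos l)) ` Kset pos A"

definition upA :: "nat \<Rightarrow> (nat \<Rightarrow> nat) \<Rightarrow> (nat \<times> nat) set \<Rightarrow> (nat \<times> nat) set" where
  "upA n pos N = {(i,j). 1 \<le> i \<and> i < j \<and> j \<le> n \<and> (\<exists>(a,b)\<in>N. pos i \<le> a \<and> b \<le> pos j)}"

context
  fixes n :: nat and pos :: "nat \<Rightarrow> nat" and A :: "(nat \<times> nat) set"
  assumes bp: "bij_betw pos {1..n} {1..n}"
  and Asub: "A \<subseteq> {(i,j). 1 \<le> i \<and> i < j \<and> j \<le> n}"
  and Apos: "\<And>i j. (i,j) \<in> A \<Longrightarrow> pos i < pos j"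
begin

lemma posinj: "i \<in> {1..n} \<Longrightarrow> j \<in> {1..n} \<Longrightarrow> pos i = pos j \<Longrightarrow> i = j"
  using bp unfolding bij_betw_def inj_on_def by blast

lemma posr: "i \<in> {1..n} \<Longrightarrow> pos i \<in> {1..n}"
  using bp unfolding bij_betw_def by blast

lemma A_in: "(i,j) \<in> A \<Longrightarrow> i \<in> {1..n} \<and> j \<in> {1..n} \<and> i < j"
  using Asub by auto

lemma Kfacts:
  assumes a: "(i,l) \<in> Kset pos A" and b: "(j,k) \<in> Kset pos A" and ne: "(i,l) \<noteq> (j,k)" and le: "pos i \<le> pos j"
  shows "pos i < pos j \<and> pos l < pos k"
proof -
  have aA: "(i,l) \<in> A" and bA: "(j,k) \<in> A" using a b unfolding Kset_def by auto
  have "pos l < pos k"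
  proof (rule ccontr)
    assume "\<not> pos l < pos k"
    then have "pos k \<le> pos l" by simp
    then show False using a bA ne le unfolding Kset_def by auto
  qed
  moreover have "pos i \<noteq> pos j"
  proof
    assume "pos i = pos j"
    then show False using b aA ne \<open>pos l < pos k\<close> unfolding Kset_def by force
  qed
  ultimately show ?thesis using le by simp
qed

lemma N_props:
  defines "N \<equiv> Nrel pos A"
  shows "N \<subseteq> {1..n} \<times> {1..n}" "\<forall>(p,q)\<in>N. p < q"
    "\<forall>p q q'. (p,q)\<in>N \<longrightarrow> (p,q')\<in>N \<longrightarrow> q = q'"
    "\<forall>p p' q. (p,q)\<in>N \<longrightarrow> (p',q)\<in>N \<longrightarrow> p = p'"
    "\<forall>p q p' q'. (p,q)\<in>N \<longrightarrow> (p',q')\<in>N \<longrightarrow> p < p' \<longrightarrow> q < q'"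
proof -
  have KA: "Kset pos A \<subseteq> A" unfolding Kset_def by auto
  show "N \<subseteq> {1..n} \<times> {1..n}" unfolding N_def Nrel_def using KA A_in posr by force
  show "\<forall>(p,q)\<in>N. p < q" unfolding N_def Nrel_def using KA Apos by force
  show "\<forall>p q q'. (p,q)\<in>N \<longrightarrow> (p,q')\<in>N \<longrightarrow> q = q'"
  proof (intro allI impI)
    fix p q q' assume "(p,q) \<in> N" "(p,q') \<in> N"
    then obtain i l j k where il: "(i,l) \<in> Kset pos A" "p = pos i" "q = pos l"
      and jk: "(j,k) \<in> Kset pos A" "p = pos j" "q' = pos k" unfolding N_def Nrel_def by auto
    show "q = q'"
    proof (cases "(i,l) = (j,k)")
      case True then show ?thesis using il jk by simp
    next
      case False then show ?thesis using Kfacts[OF il(1) jk(1)] il jk by simp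
    qed
  qed
  show "\<forall>p p' q. (p,q)\<in>N \<longrightarrow> (p',q)\<in>N \<longrightarrow> p = p'"
  proof (intro allI impI)
    fix p p' q assume "(p,q) \<in> N" "(p',q) \<in> N"
    then obtain i l j k where il: "(i,l) \<in> Kset pos A" "p = pos i" "q = pos l"
      and jk: "(j,k) \<in> Kset pos A" "p' = pos j" "q = pos k" unfolding N_def Nrel_def by auto
    show "p = p'"
    proof (cases "(i,l) = (j,k)")
      case True then show ?thesis using il jk by simp
    next
      case False
      then show ?thesis using Kfacts[OF il(1) jk(1)] Kfacts[OF jk(1) il(1)] il jk
        by (cases "pos i \<le> pos j") auto
    qed
  qed
  show "\<forall>p q p' q'. (p,q)\<in>N \<longrightarrow> (p',q')\<in>N \<longrightarrow> p < p' \<longrightarrow> q < q'"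
  proof (intro allI impI)
    fix p q p' q' assume "(p,q) \<in> N" "(p',q') \<in> N" "p < p'"
    then obtain i l j k where il: "(i,l) \<in> Kset pos A" "p = pos i" "q = pos l"
      and jk: "(j,k) \<in> Kset pos A" "p' = pos j" "q' = pos k" unfolding N_def Nrel_def by auto
    have "(i,l) \<noteq> (j,k)" using il jk \<open>p < p'\<close> by auto
    then show "q < q'" using Kfacts[OF il(1) jk(1)] il jk \<open>p < p'\<close> by simp
  qed
qed

lemma N_pstruct: "pstruct {1..n} (Nrel pos A) (rootf {1..n} (Nrel pos A))"
  using N_props by (intro pstruct_intro) blast+

abbreviation "winv \<equiv> inv_into {1..n} pos"

lemma winv_pos: "i \<in> {1..n} \<Longrightarrow> winv (pos i) = i"
  using bp by (simp add: bij_betw_inv_into_left)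

lemma K_to_N: "(i,m) \<in> (Kset pos A \<union> (Kset pos A)\<inverse>)\<^sup>* \<Longrightarrow> (pos i, pos m) \<in> (Nrel pos A \<union> (Nrel pos A)\<inverse>)\<^sup>*"
proof (induction rule: rtrancl_induct)
  case base then show ?case by simp
next
  case (step m m')
  then have "(pos m, pos m') \<in> Nrel pos A \<union> (Nrel pos A)\<inverse>" unfolding Nrel_def by auto
  then show ?case using step.IH by (meson rtrancl.rtrancl_into_rtrancl)
qed

lemma N_to_K: "(p,q) \<in> (Nrel pos A \<union> (Nrel pos A)\<inverse>)\<^sup>* \<Longrightarrow> (winv p, winv q) \<in> (Kset pos A \<union> (Kset pos A)\<inverse>)\<^sup>*"
proof (induction rule: rtrancl_induct)
  case base then show ?case by simp
next
  case (step q q')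
  have KA: "Kset pos A \<subseteq> A" unfolding Kset_def by auto
  from step.hyps(2) obtain a b where ab: "(a,b) \<in> Kset pos A"
    and "(q = pos a \<and> q' = pos b) \<or> (q = pos b \<and> q' = pos a)" unfolding Nrel_def by auto
  moreover have "a \<in> {1..n}" "b \<in> {1..n}" using ab KA A_in by auto
  ultimately have "(winv q, winv q') \<in> Kset pos A \<union> (Kset pos A)\<inverse>" using winv_pos by auto
  then show ?case using step.IH by (meson rtrancl.rtrancl_into_rtrancl)
qed

lemma chain_char:
  assumes i: "i \<in> {1..n}"
  defines "st \<equiv> rootf {1..n} (Nrel pos A)"
  shows "{m\<in>{1..n}. (i,m) \<in> (Kset pos A \<union> (Kset pos A)\<inverse>)\<^sup>*} = {m\<in>{1..n}. st (pos m) = st (pos i)}"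
proof -
  have ps: "pstruct {1..n} (Nrel pos A) st" unfolding st_def by (rule N_pstruct)
  have "(i,m) \<in> (Kset pos A \<union> (Kset pos A)\<inverse>)\<^sup>* \<longleftrightarrow> st (pos i) = st (pos m)" if m: "m \<in> {1..n}" for m
  proof
    assume "(i,m) \<in> (Kset pos A \<union> (Kset pos A)\<inverse>)\<^sup>*"
    then show "st (pos i) = st (pos m)" using K_to_N ps_comp_iff[OF ps] posr i m by blast
  next
    assume "st (pos i) = st (pos m)"
    then have "(pos i, pos m) \<in> (Nrel pos A \<union> (Nrel pos A)\<inverse>)\<^sup>*" using ps_comp_iff[OF ps] posr i m by blast
    then show "(i,m) \<in> (Kset pos A \<union> (Kset pos A)\<inverse>)\<^sup>*" using N_to_K winv_pos i m by metis
  qed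
  then show ?thesis by auto
qed

lemma sigma_char:
  assumes i: "i \<in> {1..n}"
  defines "st \<equiv> rootf {1..n} (Nrel pos A)"
  shows "Min (pos ` {m\<in>{1..n}. (i,m) \<in> (Kset pos A \<union> (Kset pos A)\<inverse>)\<^sup>*}) = st (pos i)"
proof -
  have ps: "pstruct {1..n} (Nrel pos A) st" unfolding st_def by (rule N_pstruct)
  have "pos ` {m\<in>{1..n}. st (pos m) = st (pos i)} = {p\<in>{1..n}. st p = st (pos i)}"
  proof
    show "pos ` {m\<in>{1..n}. st (pos m) = st (pos i)} \<subseteq> {p\<in>{1..n}. st p = st (pos i)}" using posr by auto
    show "{p\<in>{1..n}. st p = st (pos i)} \<subseteq> pos ` {m\<in>{1..n}. st (pos m) = st (pos i)}"
    proof
      fix p assume p: "p \<in> {p\<in>{1..n}. st p = st (pos i)}"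
      then have "p \<in> pos ` {1..n}" using bp unfolding bij_betw_def by auto
      then obtain m where "m \<in> {1..n}" "p = pos m" by blast
      then show "p \<in> pos ` {m\<in>{1..n}. st (pos m) = st (pos i)}" using p by auto
    qed
  qed
  moreover have "Min {p\<in>{1..n}. st p = st (pos i)} = st (pos i)"
  proof (rule Min_eqI)
    show "finite {p\<in>{1..n}. st p = st (pos i)}" by simp
    show "st (pos i) \<le> y" if "y \<in> {p\<in>{1..n}. st p = st (pos i)}" for y
      using ps_st_le[OF ps] that by force
    show "st (pos i) \<in> {p\<in>{1..n}. st p = st (pos i)}"
      using ps_st[OF ps posr[OF i]] ps_st_st[OF ps posr[OF i]] by simp
  qed
  ultimately show ?thesis using chain_char[OF i] unfolding st_def by simp
qed

lemma N_elem_mono: "(p,q) \<in> (Nrel pos A)\<^sup>* \<Longrightarrow> winv p \<le> winv q"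
proof (induction rule: rtrancl_induct)
  case base then show ?case by simp
next
  case (step q q')
  have KA: "Kset pos A \<subseteq> A" unfolding Kset_def by auto
  from step.hyps(2) obtain a b where ab: "(a,b) \<in> Kset pos A" "q = pos a" "q' = pos b"
    unfolding Nrel_def by auto
  then have "a \<in> {1..n}" "b \<in> {1..n}" "a < b" using KA A_in by auto
  then have "winv q < winv q'" using ab winv_pos by simp
  then show ?case using step.IH by simp
qed

lemma elem_incr:
  assumes i: "i \<in> {1..n}" and j: "j \<in> {1..n}"
  and e: "rootf {1..n} (Nrel pos A) (pos i) = rootf {1..n} (Nrel pos A) (pos j)"
  and lt: "pos i < pos j"
  shows "i < j"
proof -
  have "(pos i, pos j) \<in> (Nrel pos A)\<^sup>*"
    using ps_same_st_rtrancl[OF N_pstruct posr[OF i] posr[OF j] e] lt by simp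
  then have "i \<le> j" using N_elem_mono winv_pos i j by metis
  moreover have "i \<noteq> j" using lt by auto
  ultimately show ?thesis by simp
qed

lemma A_sub_up: "A \<subseteq> upA n pos (Nrel pos A)"
proof -
  have "(i,l) \<in> A \<longrightarrow> (\<exists>(a,b)\<in>Nrel pos A. pos i \<le> a \<and> b \<le> pos l)" for i l
  proof (induction "pos l - pos i" arbitrary: i l rule: less_induct)
    case less
    show ?case
    proof
      assume il: "(i,l) \<in> A"
      show "\<exists>(a,b)\<in>Nrel pos A. pos i \<le> a \<and> b \<le> pos l"
      proof (cases "(i,l) \<in> Kset pos A")
        case True then show ?thesis unfolding Nrel_def by force
      next
        case False
        then obtain j k where jk: "(j,k) \<in> A" "(j,k) \<noteq> (i,l)" "pos i \<le> pos j" "pos k \<le> pos l"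
          using il unfolding Kset_def by blast
        have "pos j \<noteq> pos i \<or> pos k \<noteq> pos l" using jk posinj A_in il by blast
        then have "pos k - pos j < pos l - pos i" using jk Apos[OF jk(1)] Apos[OF il] by auto
        then obtain a b where "(a,b) \<in> Nrel pos A" "pos j \<le> a" "b \<le> pos k" using less jk(1) by blast
        then show ?thesis using jk by force
      qed
    qed
  qed
  then show ?thesis unfolding upA_def using A_in by fastforce
qed

end


definition Ax :: "nat \<Rightarrow> (nat \<Rightarrow> real) \<Rightarrow> (nat \<times> nat) set" where
  "Ax n x = {(i,j). 1 \<le> i \<and> i < j \<and> j \<le> n \<and> 1 < x i - x j}"

definition Nx :: "nat \<Rightarrow> (nat \<Rightarrow> real) \<Rightarrow> (nat \<times> nat) set" where
  "Nx n x = Nrel (rank n x) (Ax n x)"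

definition stx :: "nat \<Rightarrow> (nat \<Rightarrow> real) \<Rightarrow> nat \<Rightarrow> nat" where
  "stx n x = rootf {1..n} (Nx n x)"

lemma Kset_cong:
  assumes fg: "\<And>i. i \<in> S \<Longrightarrow> f i = g i" and AS: "\<And>a b. (a,b) \<in> A \<Longrightarrow> a \<in> S \<and> b \<in> S"
  shows "Kset f A = Kset g A"
proof -
  have eq: "(\<exists>(j,k)\<in>A. (j,k) \<noteq> (i,l) \<and> f i \<le> f j \<and> f k \<le> f l) = (\<exists>(j,k)\<in>A. (j,k) \<noteq> (i,l) \<and> g i \<le> g j \<and> g k \<le> g l)"
    if il: "(i,l) \<in> A" for i l
  proof (rule bex_cong[OF refl])
    fix jk assume jk: "jk \<in> A"
    obtain j k where jk': "jk = (j,k)" by fastforce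
    have "f i = g i" "f l = g l" "f j = g j" "f k = g k" using AS[OF il] AS[of j k] jk jk' fg by auto
    then show "(case jk of (j,k) \<Rightarrow> (j,k) \<noteq> (i,l) \<and> f i \<le> f j \<and> f k \<le> f l) =
               (case jk of (j,k) \<Rightarrow> (j,k) \<noteq> (i,l) \<and> g i \<le> g j \<and> g k \<le> g l)" using jk' by simp
  qed
  show ?thesis
  proof (rule set_eqI)
    fix il :: "nat \<times> nat"
    obtain i l where il: "il = (i,l)" by fastforce
    show "il \<in> Kset f A \<longleftrightarrow> il \<in> Kset g A"
      unfolding Kset_def il using eq[of i l] by auto
  qed
qed
context
  fixes n :: nat and x :: "nat \<Rightarrow> real"
  assumes x: "x \<in> shi_complement n"
begin

lemma Ax_sub: "Ax n x \<subseteq> {(i,j). 1 \<le> i \<and> i < j \<and> j \<le> n}"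
  unfolding Ax_def by auto

lemma Ax_sub2: "Ax n x \<subseteq> {1..n} \<times> {1..n}"
  unfolding Ax_def by auto

lemma Ax_pos: "(i,j) \<in> Ax n x \<Longrightarrow> rank n x i < rank n x j"
  unfolding Ax_def using rank_iff[OF x] by auto

lemmas xbij = rank_bij[OF x]

lemma Nx_pstruct: "pstruct {1..n} (Nx n x) (stx n x)"
  unfolding Nx_def stx_def by (rule N_pstruct[OF xbij Ax_sub Ax_pos])

lemma kept_cell: "shi_kept n (cell n x) = Kset (rank n x) (Ax n x)"
proof -
  have "shi_kept n (cell n x) = Kset (shi_pos n (cell n x)) (Ax n x)"
    unfolding shi_kept_def Kset_def cell_arcs[OF x] Ax_def by simp
  also have "\<dots> = Kset (rank n x) (Ax n x)"
    by (rule Kset_cong[of "{1..n}"]) (use pos_cell[OF x] Ax_sub2 in auto)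
  finally show ?thesis .
qed

lemma sigma_cell:
  assumes i: "i \<in> {1..n}"
  shows "shi_sigma n (cell n x) i = stx n x (rank n x i)"
proof -
  have ch: "shi_chain n (cell n x) i = {m\<in>{1..n}. (i,m) \<in> (Kset (rank n x) (Ax n x) \<union> (Kset (rank n x) (Ax n x))\<inverse>)\<^sup>*}"
    unfolding shi_chain_def kept_cell ..
  have "shi_pos n (cell n x) ` shi_chain n (cell n x) i = rank n x ` shi_chain n (cell n x) i"
    unfolding ch using pos_cell[OF x] by (intro image_cong) auto
  then show ?thesis
    using sigma_char[OF xbij Ax_sub Ax_pos i] i unfolding shi_sigma_def ch stx_def Nx_def by simp
qed

lemma up_sub_Ax: "upA n (rank n x) (Nx n x) \<subseteq> Ax n x"
proof
  fix ij assume "ij \<in> upA n (rank n x) (Nx n x)"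
  then obtain i j a b where ij: "ij = (i,j)" "1 \<le> i" "i < j" "j \<le> n" "(a,b) \<in> Nx n x"
    "rank n x i \<le> a" "b \<le> rank n x j" unfolding upA_def by auto
  then obtain i' l' where il: "(i',l') \<in> Kset (rank n x) (Ax n x)" "a = rank n x i'" "b = rank n x l'"
    unfolding Nx_def Nrel_def by auto
  then have A: "(i',l') \<in> Ax n x" unfolding Kset_def by auto
  then have d: "1 < x i' - x l'" "i' \<in> {1..n}" "l' \<in> {1..n}" unfolding Ax_def by auto
  have inn: "i \<in> {1..n}" "j \<in> {1..n}" using ij by auto
  have "x i' \<le> x i"
  proof (cases "rank n x i = rank n x i'")
    case True then have "i = i'" using xbij inn d unfolding bij_betw_def inj_on_def by blast
    then show ?thesis by simp
  next
    case False then have "rank n x i < rank n x i'" using ij il by simp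
    then show ?thesis using rank_iff[OF x inn(1) d(2)] by simp
  qed
  moreover have "x j \<le> x l'"
  proof (cases "rank n x j = rank n x l'")
    case True then have "j = l'" using xbij inn d unfolding bij_betw_def inj_on_def by blast
    then show ?thesis by simp
  next
    case False then have "rank n x l' < rank n x j" using ij il by simp
    then show ?thesis using rank_iff[OF x d(3) inn(2)] by simp
  qed
  ultimately show "ij \<in> Ax n x" using d ij unfolding Ax_def by auto
qed

lemma Ax_eq_up: "Ax n x = upA n (rank n x) (Nx n x)"
  using up_sub_Ax A_sub_up[OF xbij Ax_sub Ax_pos] unfolding Nx_def by blast

lemma sigma_pfv: "pfv n (shi_sigma n (cell n x))"
proof -
  have ps: "pstruct {1..n} (Nx n x) (stx n x)" by (rule Nx_pstruct)
  have rng: "\<forall>i\<in>{1..n}. 1 \<le> shi_sigma n (cell n x) i \<and> shi_sigma n (cell n x) i \<le> n"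
    using sigma_cell ps_st[OF ps] rank_range[OF x] by fastforce
  have out: "\<forall>i. i \<notin> {1..n} \<longrightarrow> shi_sigma n (cell n x) i = 0" unfolding shi_sigma_def by simp
  have "v \<le> card {i\<in>{1..n}. shi_sigma n (cell n x) i \<le> v}" if v: "v \<in> {1..n}" for v
  proof -
    have sub: "{i\<in>{1..n}. rank n x i \<le> v} \<subseteq> {i\<in>{1..n}. shi_sigma n (cell n x) i \<le> v}"
    proof
      fix i assume i: "i \<in> {i\<in>{1..n}. rank n x i \<le> v}"
      then have i1: "i \<in> {1..n}" "rank n x i \<le> v" by auto
      have "stx n x (rank n x i) \<le> rank n x i" using ps_st_le[OF ps rank_range[OF x i1(1)]] .
      then show "i \<in> {i\<in>{1..n}. shi_sigma n (cell n x) i \<le> v}" using sigma_cell[OF i1(1)] i1 by simp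
    qed
    have "rank n x ` {i\<in>{1..n}. rank n x i \<le> v} = {1..v}"
    proof
      show "rank n x ` {i\<in>{1..n}. rank n x i \<le> v} \<subseteq> {1..v}" using rank_range[OF x] by auto
      show "{1..v} \<subseteq> rank n x ` {i\<in>{1..n}. rank n x i \<le> v}"
      proof
        fix p assume p: "p \<in> {1..v}"
        then have "p \<in> rank n x ` {1..n}" using xbij v unfolding bij_betw_def by auto
        then obtain i where "i \<in> {1..n}" "p = rank n x i" by blast
        then show "p \<in> rank n x ` {i\<in>{1..n}. rank n x i \<le> v}" using p by auto
      qed
    qed
    moreover have "inj_on (rank n x) {i\<in>{1..n}. rank n x i \<le> v}"
      using xbij unfolding bij_betw_def by (auto intro: inj_on_subset)
    ultimately have "card {i\<in>{1..n}. rank n x i \<le> v} = v" using card_image by fastforce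
    then show ?thesis using card_mono[OF _ sub] by simp
  qed
  then show ?thesis unfolding pfv_def using rng out by blast
qed

end

lemma card_reindex:
  assumes "bij_betw pos {1..n} {1..n}"
  shows "card {p\<in>{1..n}. h p = v} = card {i\<in>{1..n}. h (pos i) = (v::nat)}"
proof -
  have "pos ` {i\<in>{1..n}. h (pos i) = v} = {p\<in>{1..n}. h p = v}"
  proof
    show "pos ` {i\<in>{1..n}. h (pos i) = v} \<subseteq> {p\<in>{1..n}. h p = v}" using assms unfolding bij_betw_def by auto
    show "{p\<in>{1..n}. h p = v} \<subseteq> pos ` {i\<in>{1..n}. h (pos i) = v}"
    proof
      fix p assume p: "p \<in> {p\<in>{1..n}. h p = v}"
      then have "p \<in> pos ` {1..n}" using assms unfolding bij_betw_def by auto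
      then obtain i where "i \<in> {1..n}" "p = pos i" by blast
      then show "p \<in> pos ` {i\<in>{1..n}. h (pos i) = v}" using p by auto
    qed
  qed
  moreover have "inj_on pos {i\<in>{1..n}. h (pos i) = v}"
    using assms unfolding bij_betw_def by (auto intro: inj_on_subset)
  ultimately show ?thesis using card_image by fastforce
qed

lemma mono_bij_unique:
  fixes h1 h2 :: "nat \<Rightarrow> nat"
  assumes fin: "finite C" "finite Q"
  and m1: "\<forall>a\<in>C. \<forall>b\<in>C. a < b \<longrightarrow> h1 a < h1 b" and i1: "h1 ` C = Q"
  and m2: "\<forall>a\<in>C. \<forall>b\<in>C. a < b \<longrightarrow> h2 a < h2 b" and i2: "h2 ` C = Q"
  and j: "j \<in> C"
  shows "h1 j = h2 j"
proof -
  have key: "card {q\<in>Q. q < h j} = card {c\<in>C. c < j}"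
    if m: "\<forall>a\<in>C. \<forall>b\<in>C. a < b \<longrightarrow> h a < h b" and im: "h ` C = Q" for h :: "nat \<Rightarrow> nat"
  proof -
    have inj: "inj_on h C"
    proof (rule inj_onI)
      fix a b assume "a \<in> C" "b \<in> C" "h a = h b"
      then show "a = b" using m by (metis less_irrefl linorder_neqE_nat)
    qed
    have "h ` {c\<in>C. c < j} = {q\<in>Q. q < h j}"
    proof
      show "h ` {c\<in>C. c < j} \<subseteq> {q\<in>Q. q < h j}" using m im j by auto
      show "{q\<in>Q. q < h j} \<subseteq> h ` {c\<in>C. c < j}"
      proof
        fix q assume q: "q \<in> {q\<in>Q. q < h j}"
        then obtain c where c: "c \<in> C" "q = h c" using im by auto
        have "c < j"
        proof (rule ccontr)
          assume "\<not> c < j"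
          then consider "c = j" | "j < c" by linarith
          then show False
          proof cases
            case 1 then show False using c q by simp
          next
            case 2 then have "h j < h c" using m j c(1) by blast
            then show False using c q by simp
          qed
        qed
        then show "q \<in> h ` {c\<in>C. c < j}" using c by auto
      qed
    qed
    moreover have "inj_on h {c\<in>C. c < j}" using inj by (auto intro: inj_on_subset)
    ultimately show ?thesis using card_image by fastforce
  qed
  have k1: "card {q\<in>Q. q < h1 j} = card {q\<in>Q. q < h2 j}" using key[OF m1 i1] key[OF m2 i2] by simp
  have in1: "h1 j \<in> Q" "h2 j \<in> Q" using i1 i2 j by auto
  show ?thesis
  proof (rule ccontr)
    assume ne: "h1 j \<noteq> h2 j"
    have lt: "card {q\<in>Q. q < a} < card {q\<in>Q. q < b}" if "a < b" "a \<in> Q" for a b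
    proof (rule psubset_card_mono)
      show "finite {q\<in>Q. q < b}" using fin by simp
      show "{q\<in>Q. q < a} \<subset> {q\<in>Q. q < b}" using that by auto
    qed
    show False
      using lt[of "h1 j" "h2 j"] lt[of "h2 j" "h1 j"] ne k1 in1 by (cases "h1 j < h2 j") auto
  qed
qed

lemma upA_cong:
  assumes "\<forall>i\<in>{1..n}. f i = g i"
  shows "upA n f N = upA n g N"
proof (rule set_eqI)
  fix ij :: "nat \<times> nat"
  obtain i j where ij: "ij = (i,j)" by fastforce
  show "ij \<in> upA n f N \<longleftrightarrow> ij \<in> upA n g N"
  proof (cases "1 \<le> i \<and> i < j \<and> j \<le> n")
    case True
    then have "f i = g i" "f j = g j" using assms by auto
    then show ?thesis unfolding upA_def ij by simp
  next
    case False then show ?thesis unfolding upA_def ij by auto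
  qed
qed

lemma sigma_inj:
  assumes x1: "x1 \<in> shi_complement n" and x2: "x2 \<in> shi_complement n"
  and e: "shi_sigma n (cell n x1) = shi_sigma n (cell n x2)"
  shows "cell n x1 = cell n x2"
proof -
  let ?f = "shi_sigma n (cell n x1)"
  let ?p1 = "rank n x1" and ?p2 = "rank n x2"
  have ps1: "pstruct {1..n} (Nx n x1) (stx n x1)" by (rule Nx_pstruct[OF x1])
  have ps2: "pstruct {1..n} (Nx n x2) (stx n x2)" by (rule Nx_pstruct[OF x2])
  have f1: "?f i = stx n x1 (?p1 i)" if "i \<in> {1..n}" for i using sigma_cell[OF x1 that] .
  have f2: "?f i = stx n x2 (?p2 i)" if "i \<in> {1..n}" for i using sigma_cell[OF x2 that] e by simp
  have cnt: "\<forall>v. card {p\<in>{1..n}. stx n x1 p = v} = card {p\<in>{1..n}. stx n x2 p = v}"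
  proof
    fix v
    have "card {p\<in>{1..n}. stx n x1 p = v} = card {i\<in>{1..n}. stx n x1 (?p1 i) = v}"
      by (rule card_reindex[OF rank_bij[OF x1]])
    also have "\<dots> = card {i\<in>{1..n}. ?f i = v}" using f1 by (intro arg_cong[where f=card]) auto
    also have "\<dots> = card {i\<in>{1..n}. stx n x2 (?p2 i) = v}" using f2 by (intro arg_cong[where f=card]) auto
    also have "\<dots> = card {p\<in>{1..n}. stx n x2 p = v}"
      by (rule card_reindex[OF rank_bij[OF x2], symmetric])
    finally show "card {p\<in>{1..n}. stx n x1 p = v} = card {p\<in>{1..n}. stx n x2 p = v}" .
  qed
  from pstruct_unique[OF ps1 ps2 _ cnt] have NN: "Nx n x1 = Nx n x2"
    and SS: "\<forall>p\<in>{1..n}. stx n x1 p = stx n x2 p" by auto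
  have pp: "?p1 j = ?p2 j" if j: "j \<in> {1..n}" for j
  proof -
    define s where "s = ?f j"
    define C where "C = {i\<in>{1..n}. ?f i = s}"
    define Q where "Q = {p\<in>{1..n}. stx n x1 p = s}"
    have mono: "\<forall>a\<in>C. \<forall>b\<in>C. a < b \<longrightarrow> rank n y a < rank n y b"
      if y: "y \<in> shi_complement n" and fy: "\<forall>i\<in>{1..n}. ?f i = stx n y (rank n y i)" for y
    proof (intro ballI impI)
      fix a b assume a: "a \<in> C" and b: "b \<in> C" and ab: "a < b"
      have ain: "a \<in> {1..n}" and bin: "b \<in> {1..n}" using a b unfolding C_def by auto
      have est: "stx n y (rank n y b) = stx n y (rank n y a)" using a b fy unfolding C_def by auto
      show "rank n y a < rank n y b"
      proof (rule ccontr)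
        assume "\<not> rank n y a < rank n y b"
        moreover have "rank n y a \<noteq> rank n y b"
          using inj_onD[OF rank_inj[OF y] _ ain bin] ab by auto
        ultimately have "rank n y b < rank n y a" by simp
        then have "b < a" using elem_incr[OF rank_bij[OF y] Ax_sub[OF y] Ax_pos[OF y] bin ain] est
          unfolding stx_def Nx_def by simp
        then show False using ab by simp
      qed
    qed
    have img: "rank n y ` C = Q"
      if y: "y \<in> shi_complement n" and fy: "\<forall>i\<in>{1..n}. ?f i = stx n y (rank n y i)"
      and sy: "\<forall>p\<in>{1..n}. stx n x1 p = stx n y p" for y
    proof
      show "rank n y ` C \<subseteq> Q" using fy sy rank_range[OF y] unfolding C_def Q_def by auto
      show "Q \<subseteq> rank n y ` C"
      proof
        fix p assume p: "p \<in> Q"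
        then have "p \<in> rank n y ` {1..n}" using rank_bij[OF y] unfolding Q_def bij_betw_def by auto
        then obtain i where i: "i \<in> {1..n}" "p = rank n y i" by blast
        then have "?f i = s" using fy sy p unfolding Q_def by auto
        then show "p \<in> rank n y ` C" using i unfolding C_def by auto
      qed
    qed
    have jC: "j \<in> C" unfolding C_def s_def using j by simp
    have SS1: "\<forall>p\<in>{1..n}. stx n x1 p = stx n x1 p" by simp
    have finC: "finite C" and finQ: "finite Q" unfolding C_def Q_def by simp_all
    have f1': "\<forall>i\<in>{1..n}. ?f i = stx n x1 (rank n x1 i)" using f1 by blast
    have f2': "\<forall>i\<in>{1..n}. ?f i = stx n x2 (rank n x2 i)" using f2 by blast
    show ?thesis
      by (rule mono_bij_unique[OF finC finQ mono[OF x1 f1'] img[OF x1 f1' SS1] mono[OF x2 f2'] img[OF x2 f2' SS] jC])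
  qed
  have AA: "Ax n x1 = Ax n x2"
  proof -
    have "upA n ?p1 (Nx n x1) = upA n ?p2 (Nx n x2)"
      unfolding NN by (rule upA_cong) (use pp in blast)
    then show ?thesis using Ax_eq_up[OF x1] Ax_eq_up[OF x2] by simp
  qed
  show ?thesis
  proof (rule cell_eqI, intro allI impI conjI)
    fix i j assume h: "1 \<le> i" "i < j" "j \<le> n"
    then have inn: "i \<in> {1..n}" "j \<in> {1..n}" by auto
    show "x1 i < x1 j \<longleftrightarrow> x2 i < x2 j"
      using rank_iff[OF x1 inn(2) inn(1)] rank_iff[OF x2 inn(2) inn(1)] pp[OF inn(1)] pp[OF inn(2)] by simp
    show "1 < x1 i - x1 j \<longleftrightarrow> 1 < x2 i - x2 j"
      using AA h unfolding Ax_def by (auto simp: set_eq_iff)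
  qed
qed


lemma iso_exists:
  fixes C Q :: "nat set"
  assumes "finite C" "finite Q" "card C = card Q"
  shows "\<exists>h. bij_betw h C Q \<and> (\<forall>a\<in>C. \<forall>b\<in>C. a < b \<longrightarrow> h a < h b)"
proof -
  obtain hC where hC: "bij_betw hC {..<card C} C" "strict_mono_on {..<card C} hC"
    using ex_bij_betw_strict_mono_card[OF assms(1)] by blast
  obtain hQ where hQ: "bij_betw hQ {..<card Q} Q" "strict_mono_on {..<card Q} hQ"
    using ex_bij_betw_strict_mono_card[OF assms(2)] by blast
  define h where "h = hQ \<circ> inv_into {..<card C} hC"
  have b1: "bij_betw (inv_into {..<card C} hC) C {..<card C}" using hC(1) by (rule bij_betw_inv_into)
  have "bij_betw h C Q" unfolding h_def using b1 hQ(1) assms(3) by (auto intro: bij_betw_trans)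
  moreover have "h a < h b" if a: "a \<in> C" and b: "b \<in> C" and ab: "a < b" for a b
  proof -
    let ?ia = "inv_into {..<card C} hC a" and ?ib = "inv_into {..<card C} hC b"
    have ia: "?ia \<in> {..<card C}" "hC ?ia = a" using b1 a hC(1) by (auto simp: bij_betw_def bij_betw_inv_into_right)
    have ib: "?ib \<in> {..<card C}" "hC ?ib = b" using b1 b hC(1) by (auto simp: bij_betw_def bij_betw_inv_into_right)
    have "?ia < ?ib"
    proof (rule ccontr)
      assume "\<not> ?ia < ?ib"
      moreover have "?ia \<noteq> ?ib" using ia ib ab by auto
      ultimately have "?ib < ?ia" by simp
      then have "hC ?ib < hC ?ia" using hC(2) ia(1) ib(1) unfolding strict_mono_on_def by blast
      then show False using ia ib ab by simp
    qed
    then show ?thesis unfolding h_def using hQ(2) ia ib assms(3) by (auto simp: strict_mono_on_def)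
  qed
  ultimately show ?thesis by blast
qed

lemma Nrel_up:
  fixes n :: nat and pos :: "nat \<Rightarrow> nat"
  assumes bp: "bij_betw pos {1..n} {1..n}" and ps: "pstruct {1..n} N st"
  and incr: "\<forall>(p,q)\<in>N. inv_into {1..n} pos p < inv_into {1..n} pos q"
  shows "Nrel pos (upA n pos N) = N"
proof -
  let ?w = "inv_into {1..n} pos"
  have wr: "?w p \<in> {1..n}" "pos (?w p) = p" if "p \<in> {1..n}" for p
  proof -
    have pi: "p \<in> pos ` {1..n}" using bp that unfolding bij_betw_def by auto
    show "?w p \<in> {1..n}" using inv_into_into[OF pi] .
    show "pos (?w p) = p" using f_inv_into_f[OF pi] .
  qed
  have pinj: "i = j" if "i \<in> {1..n}" "j \<in> {1..n}" "pos i = pos j" for i j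
    using bp that unfolding bij_betw_def inj_on_def by blast
  have prange: "pos i \<in> {1..n}" if "i \<in> {1..n}" for i using bp that unfolding bij_betw_def by blast
  have inup: "(?w p, ?w q) \<in> upA n pos N" if pq: "(p,q) \<in> N" for p q
  proof -
    have "p \<in> {1..n}" "q \<in> {1..n}" using ps_sub[OF ps pq] by auto
    then show ?thesis using wr incr pq unfolding upA_def by fastforce
  qed
  have dom: "p = a \<and> q = b" if pq: "(p,q) \<in> N" and ab: "(a,b) \<in> N" and le: "p \<le> a" "b \<le> q" for p q a b
  proof -
    have na: "\<not> p < a"
    proof
      assume "p < a" then have "q < b" using ps_mono[OF ps pq ab] by blast
      then show False using le by simp
    qed
    have "p = a" using na le(1) by linarith
    then show ?thesis using ps_fun[OF ps pq] ab by simp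
  qed
  have upD: "\<exists>a b. (a,b) \<in> N \<and> pos i \<le> a \<and> b \<le> pos l" if "(i,l) \<in> upA n pos N" for i l
    using that unfolding upA_def by auto
  have upin: "i \<in> {1..n} \<and> l \<in> {1..n}" if "(i,l) \<in> upA n pos N" for i l
    using that unfolding upA_def by auto
  show ?thesis
  proof
    show "Nrel pos (upA n pos N) \<subseteq> N"
    proof
      fix pq assume "pq \<in> Nrel pos (upA n pos N)"
      then obtain i l where il: "(i,l) \<in> Kset pos (upA n pos N)" "pq = (pos i, pos l)"
        unfolding Nrel_def by auto
      then have ilu: "(i,l) \<in> upA n pos N" unfolding Kset_def by auto
      obtain a b where ab: "(a,b) \<in> N" "pos i \<le> a" "b \<le> pos l" using upD[OF ilu] by blast
      have abn: "a \<in> {1..n}" "b \<in> {1..n}" using ps_sub[OF ps ab(1)] by auto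
      have "(?w a, ?w b) \<in> upA n pos N" using inup[OF ab(1)] .
      moreover have "pos (?w a) = a" "pos (?w b) = b" using wr abn by auto
      ultimately have "(?w a, ?w b) = (i,l)"
        using il(1) ab unfolding Kset_def by auto
      then show "pq \<in> N" using il ab \<open>pos (?w a) = a\<close> \<open>pos (?w b) = b\<close> by auto
    qed
    show "N \<subseteq> Nrel pos (upA n pos N)"
    proof
      fix pq assume pqN: "pq \<in> N"
      obtain p q where pq: "pq = (p,q)" by fastforce
      have pqN': "(p,q) \<in> N" using pqN pq by simp
      have pn: "p \<in> {1..n}" "q \<in> {1..n}" using ps_sub[OF ps pqN'] by auto
      define i where "i = ?w p"
      define l where "l = ?w q"
      have il: "i \<in> {1..n}" "l \<in> {1..n}" "pos i = p" "pos l = q" using wr pn unfolding i_def l_def by auto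
      have m1: "(i,l) \<in> upA n pos N" using inup[OF pqN'] unfolding i_def l_def .
      have m2: "\<not> (\<exists>(j,k)\<in>upA n pos N. (j,k) \<noteq> (i,l) \<and> pos i \<le> pos j \<and> pos k \<le> pos l)"
      proof
        assume "\<exists>(j,k)\<in>upA n pos N. (j,k) \<noteq> (i,l) \<and> pos i \<le> pos j \<and> pos k \<le> pos l"
        then obtain j k where jk: "(j,k) \<in> upA n pos N" "(j,k) \<noteq> (i,l)" "pos i \<le> pos j" "pos k \<le> pos l"
          by blast
        obtain a b where ab: "(a,b) \<in> N" "pos j \<le> a" "b \<le> pos k" using upD[OF jk(1)] by blast
        have "p = a \<and> q = b" using dom[OF pqN' ab(1)] ab jk il by simp
        then have "pos j = pos i" "pos k = pos l" using ab jk il by auto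
        then show False using pinj upin[OF jk(1)] il jk(2) by blast
      qed
      have "(i,l) \<in> Kset pos (upA n pos N)" unfolding Kset_def using m1 m2 by blast
      then show "pq \<in> Nrel pos (upA n pos N)" unfolding Nrel_def using pq il by force
    qed
  qed
qed

lemma sigma_surj:
  assumes f: "pfv n f"
  shows "\<exists>x\<in>shi_complement n. shi_sigma n (cell n x) = f"
proof -
  define m where "m = (\<lambda>v. card {i\<in>{1..n}. f i = v})"
  have fr: "f i \<in> {1..n}" if "i \<in> {1..n}" for i using f that unfolding pfv_def by auto
  have pf: "\<forall>v\<in>{1..n}. card {u\<in>{1..n}. u \<le> v} \<le> (\<Sum>u\<in>{u\<in>{1..n}. u \<le> v}. m u)"
  proof
    fix v assume v: "v \<in> {1..n}"
    have "card {i\<in>{1..n}. f i \<le> v} = (\<Sum>u\<in>{u\<in>{1..n}. u \<le> v}. card {a\<in>{i\<in>{1..n}. f i \<le> v}. f a = u})"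
      by (rule card_fibers) (use fr in auto)
    also have "\<dots> = (\<Sum>u\<in>{u\<in>{1..n}. u \<le> v}. m u)"
    proof (rule sum.cong[OF refl])
      fix u assume "u \<in> {u\<in>{1..n}. u \<le> v}"
      then have "{a\<in>{i\<in>{1..n}. f i \<le> v}. f a = u} = {i\<in>{1..n}. f i = u}" by auto
      then show "card {a\<in>{i\<in>{1..n}. f i \<le> v}. f a = u} = m u" unfolding m_def by simp
    qed
    finally have e: "card {i\<in>{1..n}. f i \<le> v} = (\<Sum>u\<in>{u\<in>{1..n}. u \<le> v}. m u)" .
    have cu: "card {u\<in>{1..n}. u \<le> v} = v" using v by (subgoal_tac "{u\<in>{1..n}. u \<le> v} = {1..v}") auto
    have "v \<le> card {i\<in>{1..n}. f i \<le> v}" using f v unfolding pfv_def by blast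
    then show "card {u\<in>{1..n}. u \<le> v} \<le> (\<Sum>u\<in>{u\<in>{1..n}. u \<le> v}. m u)"
      using e cu by simp
  qed
  have tot: "(\<Sum>u\<in>{1..n}. m u) = card {1..n}"
  proof -
    have "card {1..n} = (\<Sum>u\<in>{1..n}. card {a\<in>{1..n}. f a = u})"
      by (rule card_fibers) (use fr in auto)
    then show ?thesis unfolding m_def by simp
  qed
  obtain N st where ps: "pstruct {1..n} N st" and cN: "\<forall>v\<in>{1..n}. card {p\<in>{1..n}. st p = v} = m v"
    using pstruct_exists[OF _ refl pf tot] by auto
  define C where "C = (\<lambda>v. {i\<in>{1..n}. f i = v})"
  define Q where "Q = (\<lambda>v. {p\<in>{1..n}. st p = v})"
  define hh where "hh = (\<lambda>v. SOME h. bij_betw h (C v) (Q v) \<and> (\<forall>a\<in>C v. \<forall>b\<in>C v. a < b \<longrightarrow> h a < h b))"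
  have hh: "bij_betw (hh v) (C v) (Q v) \<and> (\<forall>a\<in>C v. \<forall>b\<in>C v. a < b \<longrightarrow> hh v a < hh v b)" for v
  proof (cases "v \<in> {1..n}")
    case True
    have "card (C v) = card (Q v)" using cN True unfolding C_def Q_def m_def by simp
    then have "\<exists>h. bij_betw h (C v) (Q v) \<and> (\<forall>a\<in>C v. \<forall>b\<in>C v. a < b \<longrightarrow> h a < h b)"
      by (intro iso_exists) (auto simp: C_def Q_def)
    then show ?thesis unfolding hh_def by (rule someI_ex)
  next
    case False
    have "C v = {}" using False fr unfolding C_def by auto
    moreover have "Q v = {}" using False ps_st[OF ps] unfolding Q_def by auto
    ultimately have "\<exists>h. bij_betw h (C v) (Q v) \<and> (\<forall>a\<in>C v. \<forall>b\<in>C v. a < b \<longrightarrow> h a < h b)" by auto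
    then show ?thesis unfolding hh_def by (rule someI_ex)
  qed
  define pos where "pos = (\<lambda>i. hh (f i) i)"
  have posQ: "pos i \<in> Q (f i)" if "i \<in> {1..n}" for i
  proof -
    have "i \<in> C (f i)" using that unfolding C_def by simp
    then show ?thesis using hh[of "f i"] unfolding pos_def bij_betw_def by auto
  qed
  have posr: "pos i \<in> {1..n}" and stpos: "st (pos i) = f i" if "i \<in> {1..n}" for i
    using posQ[OF that] unfolding Q_def by auto
  have pos_mono: "pos i < pos j" if "i \<in> {1..n}" "j \<in> {1..n}" "f i = f j" "i < j" for i j
  proof -
    have "i \<in> C (f i)" "j \<in> C (f i)" using that unfolding C_def by auto
    then show ?thesis using hh[of "f i"] that unfolding pos_def by auto
  qed
  have bp: "bij_betw pos {1..n} {1..n}"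
  proof -
    have inj: "inj_on pos {1..n}"
    proof (rule inj_onI)
      fix i j assume i: "i \<in> {1..n}" and j: "j \<in> {1..n}" and e: "pos i = pos j"
      then have fe: "f i = f j" using stpos by metis
      show "i = j" using pos_mono[OF i j fe] pos_mono[OF j i fe[symmetric]] e by (cases "i < j") (auto simp: not_less_iff_gr_or_eq)
    qed
    have "pos ` {1..n} = {1..n}"
    proof
      show "pos ` {1..n} \<subseteq> {1..n}" using posr by auto
      show "{1..n} \<subseteq> pos ` {1..n}"
      proof
        fix p assume p: "p \<in> {1..n}"
        define v where "v = st p"
        have "p \<in> Q v" using p unfolding Q_def v_def by simp
        then have "p \<in> hh v ` C v" using hh[of v] unfolding bij_betw_def by simp
        then obtain i where i: "i \<in> C v" "hh v i = p" by blast
        then have "i \<in> {1..n}" "f i = v" unfolding C_def by auto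
        then show "p \<in> pos ` {1..n}" using i unfolding pos_def by auto
      qed
    qed
    then show ?thesis using inj unfolding bij_betw_def by simp
  qed
  let ?w = "inv_into {1..n} pos"
  have wr: "?w p \<in> {1..n}" "pos (?w p) = p" if "p \<in> {1..n}" for p
  proof -
    have pi: "p \<in> pos ` {1..n}" using bp that unfolding bij_betw_def by auto
    show "?w p \<in> {1..n}" using inv_into_into[OF pi] .
    show "pos (?w p) = p" using f_inv_into_f[OF pi] .
  qed
  have incr: "\<forall>(p,q)\<in>N. ?w p < ?w q"
  proof (clarify)
    fix p q assume pq: "(p,q) \<in> N"
    have pn: "p \<in> {1..n}" "q \<in> {1..n}" using ps_sub[OF ps pq] by auto
    let ?i = "?w p" and ?j = "?w q"
    have e: "f ?i = f ?j" using stpos[OF wr(1)[OF pn(1)]] stpos[OF wr(1)[OF pn(2)]] wr pn ps_st_step[OF ps pq] by simp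
    have lt: "pos ?i < pos ?j" using wr pn ps_lt[OF ps pq] by simp
    show "?i < ?j"
    proof (rule ccontr)
      assume "\<not> ?i < ?j"
      then consider "?i = ?j" | "?j < ?i" by linarith
      then show False
      proof cases
        case 1 then show False using lt by simp
      next
        case 2 then show False using pos_mono[OF wr(1)[OF pn(2)] wr(1)[OF pn(1)] e[symmetric]] lt by simp
      qed
    qed
  qed
  define G where "G = (\<lambda>p. {b. \<exists>a. (a,b) \<in> N \<and> p \<le> a} \<union> {n+1})"
  define g where "g = (\<lambda>p. Min (G p))"
  have finN: "finite N" using ps_sub[OF ps] by (intro finite_subset[of N "{1..n} \<times> {1..n}"]) auto
  have finG: "finite (G p)" for p
  proof -
    have "{b. \<exists>a. (a,b) \<in> N \<and> p \<le> a} \<subseteq> snd ` N" by force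
    then show ?thesis unfolding G_def using finN by (auto intro: finite_subset)
  qed
  have gin: "g p \<in> G p" for p unfolding g_def using finG by (intro Min_in) (auto simp: G_def)
  have gle: "g p \<le> b" if "b \<in> G p" for p b unfolding g_def using finG that by simp
  have gp: "\<forall>p\<in>{1..n}. p < g p \<and> g p \<le> n + 1"
  proof
    fix p assume p: "p \<in> {1..n}"
    have "p < b" if "b \<in> G p" for b
      using that p ps_lt[OF ps] unfolding G_def by (auto intro: le_less_trans)
    then show "p < g p \<and> g p \<le> n + 1" using gin[of p] gle[of "n+1" p] unfolding G_def by auto
  qed
  have gm: "\<forall>p q. 1 \<le> p \<longrightarrow> p \<le> q \<longrightarrow> q \<le> n \<longrightarrow> g p \<le> g q"
  proof (intro allI impI)
    fix p q assume "1 \<le> p" "p \<le> q" "q \<le> n"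
    then have "G q \<subseteq> G p" unfolding G_def by auto
    then show "g p \<le> g q" using gin[of q] gle by blast
  qed
  have gchar: "g p \<le> q \<longleftrightarrow> (\<exists>a b. (a,b) \<in> N \<and> p \<le> a \<and> b \<le> q)" if "q \<le> n" for p q
  proof
    assume "g p \<le> q"
    moreover have "g p \<in> G p" by (rule gin)
    ultimately show "\<exists>a b. (a,b) \<in> N \<and> p \<le> a \<and> b \<le> q" using that unfolding G_def by auto
  next
    assume "\<exists>a b. (a,b) \<in> N \<and> p \<le> a \<and> b \<le> q"
    then obtain a b where "(a,b) \<in> N" "p \<le> a" "b \<le> q" by blast
    then have "b \<in> G p" unfolding G_def by auto
    then show "g p \<le> q" using gle \<open>b \<le> q\<close> by (meson le_trans)
  qed
  obtain y where y: "stair_ok 1 n g y" using stair_exists[OF gp gm] by blast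
  have yp: "y q < y p \<and> (1 < y p - y q \<longleftrightarrow> g p \<le> q) \<and> y p - y q \<noteq> 1"
    if "1 \<le> p" "p < q" "q \<le> n" for p q
    using y that unfolding stair_ok_def by auto
  define x where "x = (\<lambda>i. if i \<in> {1..n} then y (pos i) else 0)"
  have xlt: "x i < x j \<longleftrightarrow> pos j < pos i" if i: "i \<in> {1..n}" and j: "j \<in> {1..n}" for i j
  proof -
    consider "pos i < pos j" | "pos i = pos j" | "pos j < pos i" by linarith
    then show ?thesis
    proof cases
      case 1 then show ?thesis using yp[of "pos i" "pos j"] posr i j unfolding x_def by auto
    next
      case 2 then show ?thesis using i j unfolding x_def by simp
    next
      case 3 then show ?thesis using yp[of "pos j" "pos i"] posr i j unfolding x_def by auto
    qed
  qed
  have xc: "x \<in> shi_complement n"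
  proof -
    have "x \<in> shi_space n" unfolding shi_space_def x_def by auto
    moreover have "x i - x j \<noteq> 0 \<and> x i - x j \<noteq> 1" if h: "1 \<le> i" "i < j" "j \<le> n" for i j
    proof -
      have inn: "i \<in> {1..n}" "j \<in> {1..n}" using h by auto
      have ne: "pos i \<noteq> pos j" using inj_onD[OF bij_betw_imp_inj_on[OF bp] _ inn] h by auto
      show ?thesis
      proof (cases "pos i < pos j")
        case True then show ?thesis using yp[of "pos i" "pos j"] posr inn unfolding x_def by auto
      next
        case False then have "pos j < pos i" using ne by simp
        then show ?thesis using yp[of "pos j" "pos i"] posr inn unfolding x_def by auto
      qed
    qed
    ultimately show ?thesis unfolding shi_complement_def by blast
  qed
  have rk: "rank n x i = pos i" if i: "i \<in> {1..n}" for i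
  proof -
    have "{j\<in>{1..n}. x i < x j} = {j\<in>{1..n}. pos j < pos i}" using xlt i by auto
    moreover have "pos ` {j\<in>{1..n}. pos j < pos i} = {1..<pos i}"
    proof
      show "pos ` {j\<in>{1..n}. pos j < pos i} \<subseteq> {1..<pos i}" using posr by auto
      show "{1..<pos i} \<subseteq> pos ` {j\<in>{1..n}. pos j < pos i}"
      proof
        fix p assume p: "p \<in> {1..<pos i}"
        then have pn: "p \<in> {1..n}" using posr[OF i] by auto
        then show "p \<in> pos ` {j\<in>{1..n}. pos j < pos i}" using wr[OF pn] p by (intro image_eqI[of _ _ "?w p"]) auto
      qed
    qed
    moreover have "inj_on pos {j\<in>{1..n}. pos j < pos i}"
      using bp unfolding bij_betw_def by (auto intro: inj_on_subset)
    ultimately have "card {j\<in>{1..n}. x i < x j} = pos i - 1" using card_image by fastforce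
    then show ?thesis unfolding rank_def using posr[OF i] by simp
  qed
  have AxE: "Ax n x = upA n pos N"
  proof (rule set_eqI)
    fix ij :: "nat \<times> nat"
    obtain i j where ij: "ij = (i,j)" by fastforce
    show "ij \<in> Ax n x \<longleftrightarrow> ij \<in> upA n pos N"
    proof (cases "1 \<le> i \<and> i < j \<and> j \<le> n")
      case False then show ?thesis unfolding Ax_def upA_def ij by auto
    next
      case True
      then have inn: "i \<in> {1..n}" "j \<in> {1..n}" by auto
      have ne: "pos i \<noteq> pos j" using inj_onD[OF bij_betw_imp_inj_on[OF bp] _ inn] True by auto
      have "1 < x i - x j \<longleftrightarrow> (\<exists>a b. (a,b) \<in> N \<and> pos i \<le> a \<and> b \<le> pos j)"
      proof (cases "pos i < pos j")
        case True
        then have "1 < x i - x j \<longleftrightarrow> g (pos i) \<le> pos j"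
          using yp[of "pos i" "pos j"] posr inn unfolding x_def by auto
        then show ?thesis using gchar posr inn by auto
      next
        case False
        then have lt: "pos j < pos i" using ne by simp
        then have "\<not> 1 < x i - x j" using yp[of "pos j" "pos i"] posr inn unfolding x_def by auto
        moreover have "\<not> (\<exists>a b. (a,b) \<in> N \<and> pos i \<le> a \<and> b \<le> pos j)"
          using ps_lt[OF ps] lt by fastforce
        ultimately show ?thesis by simp
      qed
      then show ?thesis unfolding Ax_def upA_def ij using True by auto
    qed
  qed
  have NxE: "Nx n x = N"
  proof -
    have "Kset (rank n x) (Ax n x) = Kset pos (Ax n x)"
      by (rule Kset_cong[of "{1..n}"]) (use rk Ax_sub2[OF xc] in auto)
    then have "Nx n x = Nrel pos (Ax n x)"
      unfolding Nx_def Nrel_def using rk Ax_sub2[OF xc] Kset_def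
      by (intro image_cong) auto
    also have "\<dots> = N" unfolding AxE by (rule Nrel_up[OF bp ps incr])
    finally show ?thesis .
  qed
  have "shi_sigma n (cell n x) = f"
  proof
    fix i show "shi_sigma n (cell n x) i = f i"
    proof (cases "i \<in> {1..n}")
      case True
      have "shi_sigma n (cell n x) i = stx n x (rank n x i)" using sigma_cell[OF xc True] .
      also have "\<dots> = rootf {1..n} N (pos i)" unfolding stx_def NxE rk[OF True] ..
      also have "\<dots> = st (pos i)" using ps_root_unique[OF ps posr[OF True]] .
      finally show ?thesis using stpos[OF True] by simp
    next
      case False then show ?thesis using f unfolding shi_sigma_def pfv_def by auto
    qed
  qed
  then show ?thesis using xc by blast
qed


lemma mod_lt2:
  fixes x M :: nat
  assumes "x < 2 * M"
  shows "x mod M = (if x < M then x else x - M)"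
proof (cases "x < M")
  case False
  then have "x mod M = (x - M) mod M" by (simp add: le_mod_geq)
  then show ?thesis using False assms by simp
qed simp

lemma shift_inj:
  fixes a c1 c2 M :: nat
  assumes "a < M" "c1 < M" "c2 < M" "(a + c1) mod M = (a + c2) mod M"
  shows "c1 = c2"
  using mod_lt2[of "a + c1" M] mod_lt2[of "a + c2" M] assms by (auto split: if_splits)

lemma shiftv_zvec: "shiftv n c u \<in> zvec n"
proof -
  have "(u i + c) mod (n+1) \<le> n" for i
  proof -
    have "(u i + c) mod (n+1) < n+1" by simp
    then show ?thesis by simp
  qed
  then show ?thesis unfolding shiftv_def zvec_def by auto
qed

lemma shiftv_rel:
  assumes u: "u \<in> zvec n"
  shows "(u, shiftv n c u) \<in> zrel n"
proof -
  have "\<forall>i\<in>{1..n}. shiftv n c u i = (u i + c) mod (n+1)" unfolding shiftv_def by simp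
  then show ?thesis using u shiftv_zvec[of n c u] unfolding zrel_def by blast
qed

lemma zrel_equiv: "equiv (zvec n) (zrel n)"
proof (rule equivI)
  show "zrel n \<subseteq> zvec n \<times> zvec n" unfolding zrel_def by auto
  show "refl_on (zvec n) (zrel n)"
  proof (rule refl_onI)
    fix u assume u: "u \<in> zvec n"
    have "\<forall>i\<in>{1..n}. u i = (u i + 0) mod (n + 1)"
    proof
      fix i assume "i \<in> {1..n}"
      then have "u i \<le> n" using u unfolding zvec_def by blast
      then show "u i = (u i + 0) mod (n + 1)" by simp
    qed
    then show "(u,u) \<in> zrel n" using u unfolding zrel_def by blast
  qed
  show "sym (zrel n)"
  proof (rule symI)
    fix u v assume "(u,v) \<in> zrel n"
    then obtain c where uv: "u \<in> zvec n" "v \<in> zvec n" "\<forall>i\<in>{1..n}. v i = (u i + c) mod (n + 1)"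
      unfolding zrel_def by blast
    define c0 where "c0 = c mod (n+1)"
    have c0: "c0 < n + 1" unfolding c0_def by simp
    have "u i = (v i + (n + 1 - c0)) mod (n + 1)" if i: "i \<in> {1..n}" for i
    proof -
      have "v i = (u i + c0) mod (n+1)" using uv(3) i unfolding c0_def by (simp add: mod_add_right_eq)
      then have "(v i + (n + 1 - c0)) mod (n + 1) = (u i + c0 + (n + 1 - c0)) mod (n+1)"
        by (simp add: mod_add_left_eq)
      also have "u i + c0 + (n + 1 - c0) = u i + (n + 1)" using c0 by simp
      also have "(u i + (n + 1)) mod (n+1) = u i mod (n+1)" by (rule mod_add_self2)
      also have "\<dots> = u i"
      proof -
        have "u i \<le> n" using uv(1) i unfolding zvec_def by blast
        then show ?thesis by simp
      qed
      finally show ?thesis by simp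
    qed
    then show "(v,u) \<in> zrel n" using uv unfolding zrel_def by blast
  qed
  show "trans (zrel n)"
  proof (rule transI)
    fix u v w assume "(u,v) \<in> zrel n" "(v,w) \<in> zrel n"
    then obtain c1 c2 where h: "u \<in> zvec n" "v \<in> zvec n" "w \<in> zvec n"
      "\<forall>i\<in>{1..n}. v i = (u i + c1) mod (n + 1)" "\<forall>i\<in>{1..n}. w i = (v i + c2) mod (n + 1)"
      unfolding zrel_def by blast
    have "w i = (u i + (c1 + c2)) mod (n+1)" if "i \<in> {1..n}" for i
      using h(4,5) that by (simp add: mod_add_left_eq add.assoc)
    then show "(u,w) \<in> zrel n" using h unfolding zrel_def by blast
  qed
qed

lemma zclass:
  assumes u: "u \<in> zvec n"
  shows "zrel n `` {u} = (\<lambda>c. shiftv n c u) ` {..<n+1}"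
proof
  show "zrel n `` {u} \<subseteq> (\<lambda>c. shiftv n c u) ` {..<n+1}"
  proof
    fix v assume "v \<in> zrel n `` {u}"
    then obtain c where v: "v \<in> zvec n" "\<forall>i\<in>{1..n}. v i = (u i + c) mod (n + 1)"
      unfolding zrel_def by blast
    have "v = shiftv n (c mod (n+1)) u"
    proof
      fix i show "v i = shiftv n (c mod (n+1)) u i"
        using v unfolding shiftv_def zvec_def by (cases "i \<in> {1..n}") (auto simp: mod_add_right_eq)
    qed
    then show "v \<in> (\<lambda>c. shiftv n c u) ` {..<n+1}" by auto
  qed
  show "(\<lambda>c. shiftv n c u) ` {..<n+1} \<subseteq> zrel n `` {u}"
  proof
    fix v assume "v \<in> (\<lambda>c. shiftv n c u) ` {..<n+1}"
    then obtain c where "v = shiftv n c u" by blast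
    then show "v \<in> zrel n `` {u}" using shiftv_rel[OF u, of c] by simp
  qed
qed

lemma zclass_card:
  assumes u: "u \<in> zvec n" and n: "n \<ge> 1"
  shows "card (zrel n `` {u}) = n + 1"
proof -
  have "inj_on (\<lambda>c. shiftv n c u) {..<n+1}"
  proof (rule inj_onI)
    fix c1 c2 assume c: "c1 \<in> {..<n+1}" "c2 \<in> {..<n+1}" and e: "shiftv n c1 u = shiftv n c2 u"
    have "shiftv n c1 u 1 = shiftv n c2 u 1" using e by simp
    then have "(u 1 + c1) mod (n+1) = (u 1 + c2) mod (n+1)" using n unfolding shiftv_def by simp
    moreover have "u 1 < n + 1"
    proof -
      have "1 \<in> {1..n}" using n by simp
      then have "u 1 \<le> n" using u unfolding zvec_def by blast
      then show ?thesis by simp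
    qed
    ultimately show "c1 = c2" using shift_inj[of "u 1" "n+1" c1 c2] c by simp
  qed
  then show ?thesis unfolding zclass[OF u] by (simp add: card_image)
qed

lemma zvec_card: "card (zvec n) = (n + 1) ^ n"
proof -
  have "bij_betw (\<lambda>v. restrict v {1..n}) (zvec n) (PiE {1..n} (\<lambda>_. {0..n}))"
  proof (rule bij_betwI')
    fix u v assume u: "u \<in> zvec n" and v: "v \<in> zvec n"
    show "(restrict u {1..n} = restrict v {1..n}) = (u = v)"
    proof
      assume e: "restrict u {1..n} = restrict v {1..n}"
      show "u = v"
      proof
        fix i show "u i = v i"
        proof (cases "i \<in> {1..n}")
          case True then show ?thesis using fun_cong[OF e, of i] by simp
        next
          case False then show ?thesis using u v unfolding zvec_def by simp
        qed
      qed
    qed simp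
  next
    fix u assume "u \<in> zvec n"
    then show "restrict u {1..n} \<in> PiE {1..n} (\<lambda>_. {0..n})" unfolding zvec_def by auto
  next
    fix g assume g: "g \<in> PiE {1..n} (\<lambda>_. {0..n})"
    define v where "v = (\<lambda>i. if i \<in> {1..n} then g i else 0)"
    have "v \<in> zvec n" using g unfolding v_def zvec_def by auto
    moreover have "g = restrict v {1..n}"
      using g unfolding v_def by (auto simp: PiE_def extensional_def restrict_def)
    ultimately show "\<exists>v\<in>zvec n. g = restrict v {1..n}" by blast
  qed
  then have "card (zvec n) = card (PiE {1..n} (\<lambda>_. {0..n::nat}))" by (rule bij_betw_same_card)
  also have "\<dots> = (n + 1) ^ n" by (simp add: card_PiE)
  finally show ?thesis .
qed

lemma zvec_finite: "finite (zvec n)"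
proof -
  have "card (zvec n) > 0" using zvec_card[of n] by simp
  then show ?thesis by (rule card_ge_0_finite)
qed

lemma quot_card:
  assumes n: "n \<ge> 1"
  shows "card (zvec n // zrel n) = (n + 1) ^ (n - 1)"
proof -
  have eq: "equiv (zvec n) (zrel n)" by (rule zrel_equiv)
  have sub: "zrel n \<subseteq> zvec n \<times> zvec n" unfolding zrel_def by auto
  have fin: "finite (zvec n // zrel n)" using zvec_finite sub by (rule finite_quotient)
  have U: "\<Union>(zvec n // zrel n) = zvec n" using eq by (rule Union_quotient)
  have cards: "\<forall>c\<in>zvec n // zrel n. card c = n + 1"
    using zclass_card[OF _ n] unfolding quotient_def by auto
  have disj: "\<forall>c1\<in>zvec n // zrel n. \<forall>c2\<in>zvec n // zrel n. c1 \<noteq> c2 \<longrightarrow> c1 \<inter> c2 = {}"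
    using quotient_disj[OF eq] by blast
  have "(n + 1) * card (zvec n // zrel n) = card (\<Union>(zvec n // zrel n))"
    by (rule card_partition) (use fin U zvec_finite cards disj in auto)
  also have "\<dots> = (n + 1) ^ n" using U zvec_card by simp
  also have "\<dots> = (n + 1) * (n + 1) ^ (n - 1)" using n by (cases n) auto
  finally have e: "(n + 1) * card (zvec n // zrel n) = (n + 1) * (n + 1) ^ (n - 1)" .
  then show ?thesis by (simp only: mult_cancel_left) simp
qed

lemma sigma_zvec_eq:
  assumes x: "x \<in> shi_complement n"
  shows "(\<lambda>i. if i \<in> {1..n} then shi_sigma n (cell n x) i mod (n + 1) else 0) = shi_sigma n (cell n x)"
proof
  fix i
  have p: "pfv n (shi_sigma n (cell n x))" by (rule sigma_pfv[OF x])
  show "(if i \<in> {1..n} then shi_sigma n (cell n x) i mod (n + 1) else 0) = shi_sigma n (cell n x) i"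
  proof (cases "i \<in> {1..n}")
    case True
    then have "shi_sigma n (cell n x) i \<le> n" using p unfolding pfv_def by blast
    then show ?thesis using True by simp
  next
    case False then show ?thesis using p unfolding pfv_def by auto
  qed
qed

lemma coset_cell:
  assumes x: "x \<in> shi_complement n"
  shows "shi_coset n (cell n x) = zrel n `` {shi_sigma n (cell n x)}"
  unfolding shi_coset_def sigma_zvec_eq[OF x] ..

theorem corollary2p3:
  fixes n :: nat
  assumes "n \<ge> 1"
  shows "bij_betw (shi_coset n) (shi_regions n) (zvec n // zrel n)
         \<and> card (shi_regions n) = (n + 1) ^ (n - 1)"
proof -
  have eq: "equiv (zvec n) (zrel n)" by (rule zrel_equiv)
  have inj: "inj_on (shi_coset n) (shi_regions n)"
  proof (rule inj_onI)
    fix R1 R2 assume R1: "R1 \<in> shi_regions n" and R2: "R2 \<in> shi_regions n"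
      and e: "shi_coset n R1 = shi_coset n R2"
    obtain x1 where x1: "x1 \<in> shi_complement n" "R1 = cell n x1" using R1 unfolding regions_eq by blast
    obtain x2 where x2: "x2 \<in> shi_complement n" "R2 = cell n x2" using R2 unfolding regions_eq by blast
    let ?f1 = "shi_sigma n (cell n x1)" and ?f2 = "shi_sigma n (cell n x2)"
    have p1: "pfv n ?f1" and p2: "pfv n ?f2" using sigma_pfv x1 x2 by auto
    have z2: "?f2 \<in> zvec n" using pfv_zvec[OF p2] .
    have "?f2 \<in> zrel n `` {?f2}" using eq z2 by (rule equiv_class_self)
    then have "?f2 \<in> zrel n `` {?f1}" using e coset_cell x1 x2 by simp
    then obtain c where c: "\<forall>i\<in>{1..n}. ?f2 i = (?f1 i + c) mod (n + 1)" unfolding zrel_def by blast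
    have "?f2 = shiftv n c ?f1"
    proof
      fix i show "?f2 i = shiftv n c ?f1 i"
        using c p2 unfolding shiftv_def pfv_def by (cases "i \<in> {1..n}") auto
    qed
    then have "?f2 = ?f1" using pollak_unique[OF p1 _ assms] p2 by simp
    then show "R1 = R2" using sigma_inj[OF x1(1) x2(1)] x1 x2 by simp
  qed
  have img: "shi_coset n ` shi_regions n = zvec n // zrel n"
  proof
    show "shi_coset n ` shi_regions n \<subseteq> zvec n // zrel n"
    proof
      fix C assume "C \<in> shi_coset n ` shi_regions n"
      then obtain x where x: "x \<in> shi_complement n" "C = shi_coset n (cell n x)" unfolding regions_eq by blast
      have "shi_sigma n (cell n x) \<in> zvec n" using pfv_zvec sigma_pfv[OF x(1)] by blast
      then show "C \<in> zvec n // zrel n" using x coset_cell[OF x(1)] unfolding quotient_def by blast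
    qed
    show "zvec n // zrel n \<subseteq> shi_coset n ` shi_regions n"
    proof
      fix C assume "C \<in> zvec n // zrel n"
      then obtain u where u: "u \<in> zvec n" "C = zrel n `` {u}" unfolding quotient_def by blast
      obtain c where pc: "pfv n (shiftv n c u)" using pollak_exists[OF u(1) assms] by blast
      obtain x where x: "x \<in> shi_complement n" "shi_sigma n (cell n x) = shiftv n c u"
        using sigma_surj[OF pc] by blast
      have "(u, shiftv n c u) \<in> zrel n" using shiftv_rel[OF u(1)] .
      then have "zrel n `` {shiftv n c u} = zrel n `` {u}" using eq by (simp add: equiv_class_eq)
      then have "shi_coset n (cell n x) = C" using coset_cell[OF x(1)] x u by simp
      moreover have "cell n x \<in> shi_regions n" using x unfolding regions_eq by blast
      ultimately show "C \<in> shi_coset n ` shi_regions n" by blast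
    qed
  qed
  have bij: "bij_betw (shi_coset n) (shi_regions n) (zvec n // zrel n)"
    using inj img unfolding bij_betw_def by blast
  then have "card (shi_regions n) = card (zvec n // zrel n)" by (rule bij_betw_same_card)
  then show ?thesis using bij quot_card[OF assms] by simp
qed


end
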